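(* If $A,B\in K(H)_+$ are positive compact operators, then $\operatorname{Adm}(A)=\operatorname{Adm}(B)$ if and only if $A$ and $B$ are Murray–von Neumann equivalent.
   Context: $\operatorname{Adm}(A)$ is the set of sequences $\xi\in\ell^\infty_+$ such that $A=\sum_j\xi_jP_j$ for some rank-one projections $P_j$ (series converging strongly if infinite). Two operators $A,B\in B(H)_+$ are Murray–von Neumann equivalent if $B=VAV^*$ for some partial isometry $V$ with $V^*V\ge R_A$ (equivalently $B=XX^*$, $A=X^*X$ for some $X\in B(H)$), where $R_A$ is the range projection of $A$. *)

theory Defs
  imports "HOL-Analysis.Analysis"
begin

text \<open>The library has no complex inner product spaces, so we introduce the class of
complex Hilbert spaces: a (real) Banach space equipped with a complex scalar
multiplication extending the real one, and a complex inner product (conjugate-linear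
in the first argument) inducing the norm.\<close>

class chilbert = banach +
  fixes scaleC :: "complex \<Rightarrow> 'a \<Rightarrow> 'a"
    and cinner :: "'a \<Rightarrow> 'a \<Rightarrow> complex"
  assumes scaleC_add_right: "scaleC c (x + y) = scaleC c x + scaleC c y"
    and scaleC_add_left: "scaleC (c + d) x = scaleC c x + scaleC d x"
    and scaleC_scaleC: "scaleC c (scaleC d x) = scaleC (c * d) x"
    and scaleC_one: "scaleC 1 x = x"
    and scaleR_scaleC: "scaleR r x = scaleC (complex_of_real r) x"
    and cinner_add_left: "cinner (x + y) z = cinner x z + cinner y z"
    and cinner_scaleC_left: "cinner (scaleC c x) y = cnj c * cinner x y"
    and cinner_commute: "cinner y x = cnj (cinner x y)"
    and cinner_self_norm: "cinner x x = complex_of_real ((norm x)\<^sup>2)"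

definition bounded_clinear :: "('a::chilbert \<Rightarrow> 'a) \<Rightarrow> bool" where
  "bounded_clinear T \<longleftrightarrow>
     (\<forall>x y. T (x + y) = T x + T y) \<and> (\<forall>c x. T (scaleC c x) = scaleC c (T x)) \<and>
     (\<exists>K. \<forall>x. norm (T x) \<le> norm x * K)"

text \<open>The Hilbert-space adjoint (exists and is unique for bounded operators by Riesz).\<close>
definition adj :: "('a::chilbert \<Rightarrow> 'a) \<Rightarrow> ('a \<Rightarrow> 'a)" where
  "adj T = (SOME S. \<forall>x y. cinner (T x) y = cinner x (S y))"

definition selfadjoint_op :: "('a::chilbert \<Rightarrow> 'a) \<Rightarrow> bool" where
  "selfadjoint_op T \<longleftrightarrow> (\<forall>x y. cinner (T x) y = cinner x (T y))"

text \<open>Positive operator: \<open>\<langle>x, A x\<rangle> \<ge> 0\<close> for all x (in a complex space this forces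
self-adjointness).\<close>
definition positive_op :: "('a::chilbert \<Rightarrow> 'a) \<Rightarrow> bool" where
  "positive_op A \<longleftrightarrow> bounded_clinear A \<and>
     (\<forall>x. Im (cinner x (A x)) = 0 \<and> Re (cinner x (A x)) \<ge> 0)"

definition op_le :: "('a::chilbert \<Rightarrow> 'a) \<Rightarrow> ('a \<Rightarrow> 'a) \<Rightarrow> bool" where
  "op_le S T \<longleftrightarrow> positive_op (\<lambda>x. T x - S x)"

definition compact_op :: "('a::chilbert \<Rightarrow> 'a) \<Rightarrow> bool" where
  "compact_op T \<longleftrightarrow> bounded_clinear T \<and> (\<forall>S. bounded S \<longrightarrow> compact (closure (T ` S)))"

definition projection_op :: "('a::chilbert \<Rightarrow> 'a) \<Rightarrow> bool" where
  "projection_op P \<longleftrightarrow> bounded_clinear P \<and> P \<circ> P = P \<and> selfadjoint_op P"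

definition rank_one_projection :: "('a::chilbert \<Rightarrow> 'a) \<Rightarrow> bool" where
  "rank_one_projection P \<longleftrightarrow> projection_op P \<and>
     (\<exists>e. e \<noteq> 0 \<and> range P = range (\<lambda>c. scaleC c e))"

definition range_proj :: "('a::chilbert \<Rightarrow> 'a) \<Rightarrow> ('a \<Rightarrow> 'a)" where
  "range_proj A = (THE R. projection_op R \<and> range R = closure (range A))"

definition partial_isometry :: "('a::chilbert \<Rightarrow> 'a) \<Rightarrow> bool" where
  "partial_isometry V \<longleftrightarrow> bounded_clinear V \<and>
     (\<forall>x. (\<forall>y. V y = 0 \<longrightarrow> cinner y x = 0) \<longrightarrow> norm (V x) = norm x)"

definition mvn_equiv :: "('a::chilbert \<Rightarrow> 'a) \<Rightarrow> ('a \<Rightarrow> 'a) \<Rightarrow> bool" where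
  "mvn_equiv A B \<longleftrightarrow> (\<exists>V. partial_isometry V \<and> op_le (range_proj A) (adj V \<circ> V) \<and>
     B = V \<circ> A \<circ> adj V)"

definition Adm :: "('a::chilbert \<Rightarrow> 'a) \<Rightarrow> (nat \<Rightarrow> real) set" where
  "Adm A = {\<xi>. (\<forall>j. \<xi> j \<ge> 0) \<and> bounded (range \<xi>) \<and>
     (\<exists>P. (\<forall>j. rank_one_projection (P j)) \<and>
          (\<forall>x. (\<lambda>j. scaleR (\<xi> j) (P j x)) sums A x))}"

end

theory Submission
  imports Defs
begin


lemma cinner_add_right: "cinner x (y + z) = cinner x y + cinner (x::'a::chilbert) z"
  by (metis cinner_commute cinner_add_left complex_cnj_add)

lemma cinner_scaleC_right: "cinner x (scaleC c y) = c * cinner (x::'a::chilbert) y"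
  by (metis cinner_commute cinner_scaleC_left complex_cnj_cnj complex_cnj_mult)

lemma cinner_zero_left[simp]: "cinner 0 (x::'a::chilbert) = 0"
  using cinner_add_left[of 0 0 x] by simp

lemma cinner_zero_right[simp]: "cinner (x::'a::chilbert) 0 = 0"
  using cinner_add_right[of x 0 0] by simp

lemma cinner_minus_left[simp]: "cinner (- x) (y::'a::chilbert) = - cinner x y"
  using cinner_add_left[of x "-x" y] by (simp add: eq_neg_iff_add_eq_0 add.commute)

lemma cinner_minus_right[simp]: "cinner x (- y::'a::chilbert) = - cinner x y"
  using cinner_add_right[of x y "-y"] by (simp add: eq_neg_iff_add_eq_0 add.commute)

lemma cinner_diff_left: "cinner (x - y) (z::'a::chilbert) = cinner x z - cinner y z"
  using cinner_add_left[of x "-y" z] by simp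

lemma cinner_diff_right: "cinner x (y - z::'a::chilbert) = cinner x y - cinner x z"
  using cinner_add_right[of x y "-z"] by simp

lemma scaleC_zero_left[simp]: "scaleC 0 (x::'a::chilbert) = 0"
  using scaleR_scaleC[of 0 x] by simp

lemma scaleC_zero_right[simp]: "scaleC c (0::'a::chilbert) = 0"
  using scaleC_add_right[of c 0 0] by simp

lemma scaleC_minus_right: "scaleC c (- x::'a::chilbert) = - scaleC c x"
  using scaleC_add_right[of c x "-x"] by (simp add: eq_neg_iff_add_eq_0 add.commute)

lemma scaleC_minus_left: "scaleC (- c) (x::'a::chilbert) = - scaleC c x"
  using scaleC_add_left[of c "-c" x] by (simp add: eq_neg_iff_add_eq_0 add.commute)

lemma scaleC_diff_right: "scaleC c (x - y::'a::chilbert) = scaleC c x - scaleC c y"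
  using scaleC_add_right[of c x "-y"] by (simp add: scaleC_minus_right)

lemma scaleC_diff_left: "scaleC (c - d) (x::'a::chilbert) = scaleC c x - scaleC d x"
  using scaleC_add_left[of c "-d" x] by (simp add: scaleC_minus_left)

lemma scaleC_of_real: "scaleC (complex_of_real r) (x::'a::chilbert) = scaleR r x"
  by (simp add: scaleR_scaleC)

lemma cinner_scaleR_left: "cinner (scaleR r x) (y::'a::chilbert) = complex_of_real r * cinner x y"
  by (simp add: scaleR_scaleC cinner_scaleC_left)

lemma cinner_scaleR_right: "cinner x (scaleR r y::'a::chilbert) = complex_of_real r * cinner x y"
  by (simp add: scaleR_scaleC cinner_scaleC_right)

lemma cinner_self: "cinner x (x::'a::chilbert) = complex_of_real ((norm x)^2)"
  by (rule cinner_self_norm)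

lemma Re_cinner_self: "Re (cinner x (x::'a::chilbert)) = (norm x)^2"
  by (simp add: cinner_self)

lemma Im_cinner_self: "Im (cinner x (x::'a::chilbert)) = 0"
  by (simp add: cinner_self)

lemma cinner_eq_zero_iff: "cinner x x = 0 \<longleftrightarrow> x = (0::'a::chilbert)"
  by (simp add: cinner_self)

lemma norm_scaleC: "norm (scaleC c (x::'a::chilbert)) = cmod c * norm x"
proof -
  have "cinner (scaleC c x) (scaleC c x) = cnj c * c * cinner x x"
    by (simp add: cinner_scaleC_left cinner_scaleC_right)
  also have "cnj c * c = complex_of_real ((cmod c)^2)"
    by (metis complex_norm_square mult.commute)
  also have "complex_of_real ((cmod c)^2) * cinner x x = complex_of_real ((cmod c)^2 * (norm x)^2)"
    by (simp add: cinner_self)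
  finally have "complex_of_real ((norm (scaleC c x))^2) = complex_of_real ((cmod c * norm x)^2)"
    by (simp only: cinner_self power_mult_distrib)
  then have "(norm (scaleC c x))^2 = (cmod c * norm x)^2" using of_real_eq_iff by blast
  then show ?thesis by (simp add: power2_eq_iff_nonneg)
qed

lemma norm_add_sq: "(norm (x + y))^2 = (norm x)^2 + (norm (y::'a::chilbert))^2 + 2 * Re (cinner x y)"
proof -
  have "cinner (x+y) (x+y) = cinner x x + cinner y y + (cinner x y + cinner y x)"
    by (simp add: cinner_add_left cinner_add_right)
  moreover have "cinner x y + cinner y x = complex_of_real (2 * Re (cinner x y))"
    by (metis cinner_commute complex_add_cnj)
  ultimately have "complex_of_real ((norm (x+y))^2) = complex_of_real ((norm x)^2 + (norm y)^2 + 2 * Re (cinner x y))"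
    by (simp add: cinner_self)
  then show ?thesis using of_real_eq_iff by blast
qed

lemma norm_diff_sq: "(norm (x - y))^2 = (norm x)^2 + (norm (y::'a::chilbert))^2 - 2 * Re (cinner x y)"
  using norm_add_sq[of x "-y"] by simp

lemma cinner_cauchy_schwarz: "cmod (cinner x y) \<le> norm x * norm (y::'a::chilbert)"
proof (cases "y = 0")
  case True then show ?thesis by simp
next
  case False
  define t where "t = cinner y x / complex_of_real ((norm y)^2)"
  have ny: "norm y > 0" using False by simp
  have "0 \<le> (norm (x - scaleC t y))^2" by simp
  also have "\<dots> = (norm x)^2 + (cmod t * norm y)^2 - 2 * Re (cinner x (scaleC t y))"
    by (simp add: norm_diff_sq norm_scaleC)
  also have "cinner x (scaleC t y) = t * cinner x y" by (simp add: cinner_scaleC_right)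
  also have "t * cinner x y = complex_of_real ((cmod (cinner x y))^2 / (norm y)^2)"
  proof -
    have "t * cinner x y = (cinner x y * cnj (cinner x y)) / complex_of_real ((norm y)^2)"
      unfolding t_def using cinner_commute[of y x] by (simp add: mult.commute)
    also have "cinner x y * cnj (cinner x y) = complex_of_real ((cmod (cinner x y))^2)"
      by (rule complex_norm_square[symmetric])
    finally show ?thesis by simp
  qed
  also have "cmod t = cmod (cinner x y) / (norm y)^2"
    unfolding t_def using cinner_commute[of y x] ny by (simp add: norm_divide norm_power)
  finally have "0 \<le> (norm x)^2 - (cmod (cinner x y))^2 / (norm y)^2"
    using ny by (simp add: power_divide power2_eq_square field_simps)
  then have "(cmod (cinner x y))^2 \<le> (norm x * norm y)^2"
    using ny by (simp add: field_simps power_mult_distrib)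
  then show ?thesis by (simp add: power2_le_iff_abs_le)
qed

lemma cinner_ext_left: "(\<And>z. cinner z x = cinner z y) \<Longrightarrow> x = (y::'a::chilbert)"
  by (metis cinner_diff_right cinner_eq_zero_iff eq_iff_diff_eq_0)

lemma cinner_ext_right: "(\<And>z. cinner x z = cinner y z) \<Longrightarrow> x = (y::'a::chilbert)"
  by (metis cinner_diff_left cinner_eq_zero_iff eq_iff_diff_eq_0)

lemma bounded_linear_cinner_right: "bounded_linear (\<lambda>x. cinner a (x::'a::chilbert))"
  apply (rule bounded_linear_intro[where K="norm a"])
    apply (simp add: cinner_add_right)
   apply (simp add: cinner_scaleR_right scaleR_conv_of_real)
  by (metis cinner_cauchy_schwarz mult.commute)

lemma bounded_linear_cinner_left: "bounded_linear (\<lambda>x. cinner (x::'a::chilbert) a)"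
  apply (rule bounded_linear_intro[where K="norm a"])
    apply (simp add: cinner_add_left)
   apply (simp add: cinner_scaleR_left scaleR_conv_of_real)
  by (metis cinner_cauchy_schwarz)

lemma bounded_linear_scaleC_left: "bounded_linear (\<lambda>c. scaleC c (e::'a::chilbert))"
  apply (rule bounded_linear_intro[where K="norm e"])
    apply (simp add: scaleC_add_left)
   apply (simp add: scaleC_scaleC[symmetric] scaleR_scaleC scaleR_conv_of_real)
  by (simp add: norm_scaleC)

lemma bounded_linear_scaleC_right: "bounded_linear (\<lambda>x. scaleC c (x::'a::chilbert))"
  apply (rule bounded_linear_intro[where K="cmod c"])
    apply (simp add: scaleC_add_right)
   apply (simp add: scaleC_scaleC scaleR_scaleC mult.commute)
  by (simp add: norm_scaleC mult.commute)

lemma bclin_blin: "bounded_clinear T \<Longrightarrow> bounded_linear T"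
  unfolding bounded_clinear_def
  apply (elim conjE exE)
  apply (rule bounded_linear_intro)
  by (auto simp: scaleR_scaleC)


lemma bclinD:
  assumes "bounded_clinear T"
  shows "T (x + y) = T x + T y" "T (scaleC c x) = scaleC c (T x)"
  using assms unfolding bounded_clinear_def by auto

lemma bclin_zero: "bounded_clinear T \<Longrightarrow> T 0 = 0"
  using bclinD(2)[of T 0 0] by simp

lemma bclin_minus: "bounded_clinear T \<Longrightarrow> T (- x) = - T x"
  using bclinD(2)[of T "-1" x] by (simp add: scaleC_minus_left scaleC_one)

lemma bclin_diff: "bounded_clinear T \<Longrightarrow> T (x - y) = T x - T y"
  using bclinD(1)[of T x "-y"] bclin_minus[of T y] by simp

lemma bclin_scaleR: "bounded_clinear T \<Longrightarrow> T (scaleR r x) = scaleR r (T x)"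
  by (simp add: scaleR_scaleC bclinD(2))

lemma bclin_sum: "bounded_clinear T \<Longrightarrow> T (sum f A) = sum (\<lambda>i. T (f i)) A"
  using linear_sum[OF bounded_linear.linear[OF bclin_blin]] by blast

lemma bclin_sums: "bounded_clinear T \<Longrightarrow> f sums s \<Longrightarrow> (\<lambda>n. T (f n)) sums T s"
  using bounded_linear.sums[OF bclin_blin] by blast

lemma bclin_tendsto: "bounded_clinear T \<Longrightarrow> X \<longlonglongrightarrow> l \<Longrightarrow> (\<lambda>n. T (X n)) \<longlonglongrightarrow> T l"
  using bounded_linear.tendsto[OF bclin_blin] by blast

lemma bclin_bound: "bounded_clinear T \<Longrightarrow> \<exists>K>0. \<forall>x. norm (T x) \<le> norm x * K"
  using bounded_linear.pos_bounded[OF bclin_blin] by blast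

lemma posD: "positive_op T \<Longrightarrow> bounded_clinear T"
  "positive_op T \<Longrightarrow> Im (cinner x (T x)) = 0"
  "positive_op T \<Longrightarrow> Re (cinner x (T x)) \<ge> 0"
  unfolding positive_op_def by auto

lemma pos_selfadj:
  assumes "positive_op T"
  shows "cinner (T x) y = cinner x (T y)"
proof -
  have L: "bounded_clinear T" using posD(1)[OF assms] .
  have e1: "cinner (x+y) (T (x+y)) = cinner x (T x) + cinner y (T y) + (cinner x (T y) + cinner y (T x))"
    by (simp add: bclinD(1)[OF L] cinner_add_left cinner_add_right)
  have i1: "Im (cinner x (T y) + cinner y (T x)) = 0"
    using e1 posD(2)[OF assms, of "x+y"] posD(2)[OF assms, of x] posD(2)[OF assms, of y] by simp
  have e2: "cinner (x + scaleC \<i> y) (T (x + scaleC \<i> y)) = cinner x (T x) + cinner y (T y) + (\<i> * cinner x (T y) - \<i> * cinner y (T x))"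
    by (simp add: bclinD[OF L] cinner_add_left cinner_add_right cinner_scaleC_left cinner_scaleC_right algebra_simps)
  have i2: "Re (cinner x (T y)) - Re (cinner y (T x)) = 0"
    using e2 posD(2)[OF assms, of "x+scaleC \<i> y"] posD(2)[OF assms, of x] posD(2)[OF assms, of y] by simp
  have "cinner x (T y) = cnj (cinner y (T x))"
    using i1 i2 by (simp add: complex_eq_iff)
  then show ?thesis by (metis cinner_commute)
qed

definition qf :: "('a::chilbert \<Rightarrow> 'a) \<Rightarrow> 'a \<Rightarrow> real" where
  "qf T x = Re (cinner x (T x))"

definition topv :: "('a::chilbert \<Rightarrow> 'a) \<Rightarrow> real" where
  "topv T = Sup (qf T ` {x. norm x = 1})"

lemma pos_cinner_real: "positive_op T \<Longrightarrow> cinner x (T x) = complex_of_real (qf T x)"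
  unfolding qf_def using posD(2)[of T x] by (simp add: complex_eq_iff)

lemma qf_nonneg: "positive_op T \<Longrightarrow> qf T x \<ge> 0"
  unfolding qf_def using posD(3) by blast

lemma qf_scaleR: "bounded_clinear T \<Longrightarrow> qf T (scaleR r x) = r^2 * qf T x"
  unfolding qf_def by (simp add: bclin_scaleR cinner_scaleR_left cinner_scaleR_right power2_eq_square)

lemma qf_bdd: "bounded_clinear T \<Longrightarrow> \<exists>K. \<forall>x. qf T x \<le> K * (norm x)^2"
proof -
  assume L: "bounded_clinear T"
  obtain K where K: "\<forall>x. norm (T x) \<le> norm x * K" using bclin_bound[OF L] by blast
  have "qf T x \<le> K * (norm x)^2" for x
  proof -
    have "qf T x \<le> cmod (cinner x (T x))" unfolding qf_def by (rule complex_Re_le_cmod)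
    also have "\<dots> \<le> norm x * norm (T x)" by (rule cinner_cauchy_schwarz)
    also have "\<dots> \<le> norm x * (norm x * K)" using K by (simp add: mult_left_mono)
    finally show ?thesis by (simp add: power2_eq_square algebra_simps)
  qed
  then show ?thesis by blast
qed

lemma topv_bdd: "bounded_clinear T \<Longrightarrow> bdd_above (qf T ` {x. norm x = 1})"
proof -
  assume L: "bounded_clinear T"
  obtain K where K: "\<forall>x. qf T x \<le> K * (norm x)^2" using qf_bdd[OF L] by blast
  have "\<forall>y\<in>qf T ` {x. norm x = 1}. y \<le> K"
  proof
    fix y assume "y \<in> qf T ` {x. norm x = 1}"
    then obtain x where "norm x = 1" "y = qf T x" by blast
    then show "y \<le> K" using K[rule_format, of x] by simp
  qed
  then show ?thesis unfolding bdd_above_def by blast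
qed

lemma qf_le_topv_unit: "bounded_clinear T \<Longrightarrow> norm x = 1 \<Longrightarrow> qf T x \<le> topv T"
  unfolding topv_def by (rule cSup_upper) (auto intro: topv_bdd)

lemma topv_nonneg: "positive_op T \<Longrightarrow> norm (u::'a::chilbert) = 1 \<Longrightarrow> 0 \<le> topv (T::'a \<Rightarrow> 'a)"
  using qf_le_topv_unit[of T u] qf_nonneg[of T u] posD(1)[of T] by linarith

lemma qf_le_topv: 
  assumes "positive_op T"
  shows "qf T x \<le> topv T * (norm x)^2"
proof (cases "x = 0")
  case True
  then show ?thesis using bclin_zero[OF posD(1)[OF assms]] by (simp add: qf_def)
next
  case False
  define u where "u = scaleR (1 / norm x) x"
  have nu: "norm u = 1" using False by (simp add: u_def)
  have xu: "x = scaleR (norm x) u" using False by (simp add: u_def)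
  have "qf T x = (norm x)^2 * qf T u"
    by (subst xu, rule qf_scaleR[OF posD(1)[OF assms]])
  also have "\<dots> \<le> (norm x)^2 * topv T"
    using qf_le_topv_unit[OF posD(1)[OF assms] nu] by (simp add: mult_left_mono)
  finally show ?thesis by (simp add: mult.commute)
qed

lemma qf_add_diff:
  assumes "positive_op T"
  shows "qf T (x + y) - qf T (x - y) = 4 * Re (cinner y (T x))"
proof -
  have L: "bounded_clinear T" using posD(1)[OF assms] .
  have "cinner x (T y) = cnj (cinner y (T x))"
    using pos_selfadj[OF assms, of x y] cinner_commute by metis
  then show ?thesis unfolding qf_def
    by (simp add: bclinD(1)[OF L] bclin_diff[OF L] cinner_add_left cinner_add_right
        cinner_diff_left cinner_diff_right)
qed

lemma norm_le_topv:
  assumes "positive_op T"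
  shows "norm (T x) \<le> topv T * norm x"
proof (cases "T x = 0")
  case True
  have "x \<noteq> 0 \<Longrightarrow> 0 \<le> topv T"
    using topv_nonneg[OF assms, of "scaleR (1/norm x) x"] by simp
  then show ?thesis using True bclin_zero[OF posD(1)[OF assms]] by (cases "x = 0") auto
next
  case False
  have L: "bounded_clinear T" using posD(1)[OF assms] .
  have x0: "x \<noteq> 0" using False bclin_zero[OF L] by auto
  define t where "t = norm x / norm (T x)"
  have tpos: "t > 0" using False x0 by (simp add: t_def)
  define y where "y = scaleR t (T x)"
  have ny: "norm y = norm x" using False tpos by (simp add: y_def t_def)
  have "Re (cinner y (T x)) = t * (norm (T x))^2"
    by (simp add: y_def cinner_scaleR_left Re_cinner_self)
  also have "\<dots> = norm x * norm (T x)" using False by (simp add: t_def power2_eq_square)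
  finally have r: "Re (cinner y (T x)) = norm x * norm (T x)" .
  have "4 * (norm x * norm (T x)) = qf T (x + y) - qf T (x - y)"
    using qf_add_diff[OF assms, of x y] r by simp
  also have "\<dots> \<le> qf T (x + y)" using qf_nonneg[OF assms, of "x - y"] by simp
  also have "\<dots> \<le> topv T * (norm (x + y))^2" by (rule qf_le_topv[OF assms])
  also have "\<dots> \<le> topv T * (2 * norm x)^2"
  proof -
    have "norm (x + y) \<le> 2 * norm x" using norm_triangle_ineq[of x y] ny by simp
    then have "(norm (x+y))^2 \<le> (2 * norm x)^2" by (rule power_mono) simp
    moreover have "0 \<le> topv T" using topv_nonneg[OF assms, of "scaleR (1/norm x) x"] x0 by simp
    ultimately show ?thesis by (simp add: mult_left_mono)
  qed
  finally have "4 * (norm x * norm (T x)) \<le> 4 * (norm x * (topv T * norm x))"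
    by (simp add: power2_eq_square algebra_simps)
  then have "norm x * norm (T x) \<le> norm x * (topv T * norm x)" by simp
  then show ?thesis using x0 by (simp add: mult.commute)
qed


definition rk1 :: "'a::chilbert \<Rightarrow> 'a \<Rightarrow> 'a" where
  "rk1 e x = scaleC (cinner e x) e"

definition seqc :: "('a::chilbert \<Rightarrow> 'a) \<Rightarrow> bool" where
  "seqc T \<longleftrightarrow> (\<forall>x::nat \<Rightarrow> 'a. bounded (range x) \<longrightarrow> (\<exists>l r. strict_mono r \<and> (\<lambda>n. T (x (r n))) \<longlonglongrightarrow> l))"

lemma compact_seqc: 
  assumes "compact_op T" shows "seqc T"
  unfolding seqc_def
proof (intro allI impI)
  fix x :: "nat \<Rightarrow> 'a" assume b: "bounded (range x)"
  have "compact (closure (T ` range x))" using assms b unfolding compact_op_def by simp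
  then have sc: "seq_compact (closure (T ` range x))" by (rule compact_imp_seq_compact)
  have "\<forall>n. T (x n) \<in> closure (T ` range x)" by (simp add: closure_def)
  then obtain l r where "strict_mono r" "((\<lambda>n. T (x n)) \<circ> r) \<longlonglongrightarrow> l"
    using sc unfolding seq_compact_def by meson
  then show "\<exists>l r. strict_mono r \<and> (\<lambda>n. T (x (r n))) \<longlonglongrightarrow> l" by (auto simp: o_def)
qed

lemma bclin_rk1: "bounded_clinear (rk1 e)"
  unfolding bounded_clinear_def rk1_def
proof (intro conjI allI exI)
  show "scaleC (cinner e (x + y)) e = scaleC (cinner e x) e + scaleC (cinner e y) e" for x y
    by (simp add: cinner_add_right scaleC_add_left)
  show "scaleC (cinner e (scaleC c x)) e = scaleC c (scaleC (cinner e x) e)" for c x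
    by (simp add: cinner_scaleC_right scaleC_scaleC)
  show "norm (scaleC (cinner e x) e) \<le> norm x * (norm e * norm e)" for x
    using cinner_cauchy_schwarz[of e x] mult_left_mono[of "cmod (cinner e x)" "norm e * norm x" "norm e"]
    by (simp add: norm_scaleC algebra_simps)
qed

lemma seqc_sub_rk1:
  assumes "seqc T"
  shows "seqc (\<lambda>x. T x - scaleR c (rk1 e x))"
  unfolding seqc_def
proof (intro allI impI)
  fix x :: "nat \<Rightarrow> 'a" assume b: "bounded (range x)"
  obtain l1 r1 where r1: "strict_mono r1" "(\<lambda>n. T (x (r1 n))) \<longlonglongrightarrow> l1"
    using assms b unfolding seqc_def by blast
  obtain B where B: "\<forall>n. norm (x n) \<le> B" using b unfolding bounded_iff by blast
  have "bounded (range (\<lambda>n. cinner e (x (r1 n))))"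
    unfolding bounded_iff
  proof (intro exI allI ballI)
    fix z assume "z \<in> range (\<lambda>n. cinner e (x (r1 n)))"
    then obtain n where "z = cinner e (x (r1 n))" by blast
    then have "norm z \<le> norm e * norm (x (r1 n))" using cinner_cauchy_schwarz by simp
    also have "\<dots> \<le> norm e * B" using B by (simp add: mult_left_mono)
    finally show "norm z \<le> norm e * B" .
  qed
  then obtain l2 r2 where r2: "strict_mono r2" "((\<lambda>n. cinner e (x (r1 n))) \<circ> r2) \<longlonglongrightarrow> l2"
    using bounded_imp_convergent_subsequence by blast
  have c1: "(\<lambda>n. T (x (r1 (r2 n)))) \<longlonglongrightarrow> l1"
    using LIMSEQ_subseq_LIMSEQ[OF r1(2) r2(1)] by (simp add: o_def)
  have c2: "(\<lambda>n. scaleC (cinner e (x (r1 (r2 n)))) e) \<longlonglongrightarrow> scaleC l2 e"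
    using bounded_linear.tendsto[OF bounded_linear_scaleC_left r2(2)] by (simp add: o_def)
  have "(\<lambda>n. T (x (r1 (r2 n))) - scaleR c (rk1 e (x (r1 (r2 n))))) \<longlonglongrightarrow> l1 - scaleR c (scaleC l2 e)"
    unfolding rk1_def by (intro tendsto_intros c1 c2)
  moreover have "strict_mono (r1 \<circ> r2)" using r1(1) r2(1) by (rule strict_mono_o)
  ultimately show "\<exists>l r. strict_mono r \<and> (\<lambda>n. T (x (r n)) - scaleR c (rk1 e (x (r n)))) \<longlonglongrightarrow> l"
    by (auto simp: o_def)
qed

lemma rk1_idem: "norm e = 1 \<Longrightarrow> rk1 e (rk1 e x) = rk1 e x"
  unfolding rk1_def by (simp add: cinner_scaleC_right cinner_self)

lemma rk1_selfadj: "cinner (rk1 e x) y = cinner x (rk1 e y)"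
  unfolding rk1_def
  by (metis cinner_commute cinner_scaleC_left cinner_scaleC_right mult.commute)

lemma rk1_rank_one: 
  assumes "norm e = 1" shows "rank_one_projection (rk1 e)"
  unfolding rank_one_projection_def projection_op_def selfadjoint_op_def
proof (intro conjI exI)
  show "bounded_clinear (rk1 e)" by (rule bclin_rk1)
  show "rk1 e \<circ> rk1 e = rk1 e" using rk1_idem[OF assms] by auto
  show "\<forall>x y. cinner (rk1 e x) y = cinner x (rk1 e y)" using rk1_selfadj by blast
  show "e \<noteq> 0" using assms by auto
  show "range (rk1 e) = range (\<lambda>c. scaleC c e)"
  proof
    show "range (rk1 e) \<subseteq> range (\<lambda>c. scaleC c e)" unfolding rk1_def by auto
    show "range (\<lambda>c. scaleC c e) \<subseteq> range (rk1 e)"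
    proof
      fix z assume "z \<in> range (\<lambda>c. scaleC c e)"
      then obtain c where "z = scaleC c e" by blast
      then have "z = rk1 e z" using assms unfolding rk1_def
        by (simp add: cinner_scaleC_right cinner_self)
      then show "z \<in> range (rk1 e)" by (metis rangeI)
    qed
  qed
qed

lemma rank_one_rk1:
  assumes "rank_one_projection P"
  shows "\<exists>e. norm e = 1 \<and> P = rk1 e"
proof -
  obtain f where f: "f \<noteq> 0" "range P = range (\<lambda>c. scaleC c f)" and
    L: "bounded_clinear P" and idem: "P \<circ> P = P" and sa: "\<forall>x y. cinner (P x) y = cinner x (P y)"
    using assms unfolding rank_one_projection_def projection_op_def selfadjoint_op_def by blast
  define e where "e = scaleC (complex_of_real (1 / norm f)) f"
  have ne: "norm e = 1" using f(1) by (simp add: e_def norm_scaleC norm_divide)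
  have "e \<in> range P" using f(2) e_def by auto
  then obtain z where "e = P z" by blast
  then have Pe: "P e = e" using idem by (metis comp_apply)
  have rng: "\<And>x. \<exists>c. P x = scaleC c e"
  proof -
    fix x
    have "P x \<in> range (\<lambda>c. scaleC c f)" using f(2) by blast
    then obtain c where "P x = scaleC c f" by blast
    moreover have "f = scaleC (complex_of_real (norm f)) e" using f(1)
      by (simp add: e_def scaleC_scaleC scaleC_one)
    ultimately have "P x = scaleC (c * complex_of_real (norm f)) e" by (metis scaleC_scaleC)
    then show "\<exists>c. P x = scaleC c e" by blast
  qed
  have "P x = rk1 e x" for x
  proof -
    obtain c where c: "P x = scaleC c e" using rng by blast
    have "cinner e (P x) = cinner (P e) x" using sa by simp
    then have "c = cinner e x" using c Pe ne by (simp add: cinner_scaleC_right cinner_self)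
    then show ?thesis using c unfolding rk1_def by simp
  qed
  then show ?thesis using ne by blast
qed

lemma pos_top_eigen:
  fixes T :: "'a::chilbert \<Rightarrow> 'a"
  assumes pos: "positive_op T" and sc: "seqc T" and u: "norm (u::'a) = 1"
  shows "\<exists>e. norm e = 1 \<and> T e = scaleR (topv T) e"
proof (cases "topv T = 0")
  case True
  have "T u = 0" using norm_le_topv[OF pos, of u] True by simp
  then show ?thesis using u True by auto
next
  case False
  define M where "M = topv T"
  have Mpos: "M > 0" using False topv_nonneg[OF pos u] by (simp add: M_def)
  have L: "bounded_clinear T" using posD(1)[OF pos] .
  have "\<exists>x. norm x = 1 \<and> M - 1 / real (Suc n) < qf T x" for n
  proof -
    have ne: "qf T ` {x. norm x = 1} \<noteq> {}" using u by blast
    have "M - 1 / real (Suc n) < Sup (qf T ` {x. norm x = 1})" by (simp add: M_def topv_def)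
    then obtain y where "y \<in> qf T ` {x. norm x = 1}" "M - 1 / real (Suc n) < y"
      using less_cSup_iff[OF ne topv_bdd[OF L]] by blast
    then show ?thesis by blast
  qed
  then obtain x where x: "\<And>n. norm (x n) = 1" "\<And>n. M - 1 / real (Suc n) < qf T (x n)"
    by metis
  have b: "bounded (range x)" unfolding bounded_iff using x(1) by auto
  obtain y r where r: "strict_mono r" "(\<lambda>n. T (x (r n))) \<longlonglongrightarrow> y"
    using sc b unfolding seqc_def by blast
  have est: "(norm (T (x n) - scaleR M (x n)))^2 \<le> 2 * M / real (Suc n)" for n
  proof -
    have "(norm (T (x n) - scaleR M (x n)))^2 = (norm (T (x n)))^2 + M^2 - 2 * M * qf T (x n)"
    proof -
      have "Re (cinner (T (x n)) (scaleR M (x n))) = M * qf T (x n)"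
        unfolding qf_def using pos_selfadj[OF pos, of "x n" "x n"]
        by (simp add: cinner_scaleR_right)
      then show ?thesis by (simp add: norm_diff_sq x(1))
    qed
    also have "\<dots> \<le> M^2 + M^2 - 2 * M * qf T (x n)"
      using norm_le_topv[OF pos, of "x n"] x(1) norm_ge_zero[of "T (x n)"]
      by (simp add: M_def power_mono)
    also have "\<dots> \<le> 2 * M / real (Suc n)"
    proof -
      have "M - qf T (x n) \<le> 1 / real (Suc n)" using x(2)[of n] by linarith
      then have "M * (M - qf T (x n)) \<le> M * (1 / real (Suc n))" using Mpos by (intro mult_left_mono) auto
      then have "M * M \<le> M * qf T (x n) + M / real (Suc n)" by (simp add: algebra_simps)
      then show ?thesis by (simp add: power2_eq_square add_divide_distrib[symmetric] field_simps)
    qed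
    finally show ?thesis .
  qed
  have lim0: "(\<lambda>n. T (x (r n)) - scaleR M (x (r n))) \<longlonglongrightarrow> 0"
  proof -
    have "(\<lambda>n. 2 * M * inverse (real (Suc n))) \<longlonglongrightarrow> 2 * M * 0"
      by (intro tendsto_intros LIMSEQ_inverse_real_of_nat)
    then have "(\<lambda>n. sqrt (2 * M / real (Suc n))) \<longlonglongrightarrow> sqrt (2 * M * 0)"
      by (intro tendsto_intros) (simp add: divide_inverse)
    then have l1: "(\<lambda>n. sqrt (2 * M / real (Suc n))) \<longlonglongrightarrow> 0" by simp
    have "(\<lambda>n. T (x n) - scaleR M (x n)) \<longlonglongrightarrow> 0"
    proof (rule Lim_null_comparison[OF _ l1])
      show "\<forall>\<^sub>F n in sequentially. norm (T (x n) - scaleR M (x n)) \<le> sqrt (2 * M / real (Suc n))"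
        using est by (intro always_eventually allI) (simp add: real_le_rsqrt)
    qed
    then show ?thesis using LIMSEQ_subseq_LIMSEQ[OF _ r(1)] by (simp add: o_def)
  qed
  have "(\<lambda>n. scaleR M (x (r n))) \<longlonglongrightarrow> y - 0"
  proof -
    have "(\<lambda>n. T (x (r n)) - (T (x (r n)) - scaleR M (x (r n)))) \<longlonglongrightarrow> y - 0"
      by (intro tendsto_intros r(2) lim0)
    then show ?thesis by simp
  qed
  then have "(\<lambda>n. scaleR (1/M) (scaleR M (x (r n)))) \<longlonglongrightarrow> scaleR (1/M) y"
    by (intro tendsto_intros) simp
  then have xl: "(\<lambda>n. x (r n)) \<longlonglongrightarrow> scaleR (1/M) y" using Mpos by simp
  define e where "e = scaleR (1/M) y"
  have "(\<lambda>n. norm (x (r n))) \<longlonglongrightarrow> norm e" using xl tendsto_norm e_def by blast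
  then have ne: "norm e = 1" using x(1) by (simp add: LIMSEQ_const_iff)
  have "(\<lambda>n. T (x (r n))) \<longlonglongrightarrow> T e" using bclin_tendsto[OF L xl] e_def by simp
  then have "T e = y" using r(2) LIMSEQ_unique by blast
  then have "T e = scaleR M e" using Mpos by (simp add: e_def)
  then show ?thesis using ne M_def by blast
qed


definition ED :: "('a::chilbert \<Rightarrow> 'a) \<Rightarrow> (nat \<Rightarrow> real) \<Rightarrow> (nat \<Rightarrow> 'a) \<Rightarrow> bool" where
  "ED T l e \<longleftrightarrow> (\<forall>j. l j \<ge> 0) \<and> decseq l \<and> l \<longlonglongrightarrow> 0 \<and> (\<forall>j. norm (e j) = 1) \<and>
     (\<forall>i j. i \<noteq> j \<longrightarrow> l i > 0 \<longrightarrow> l j > 0 \<longrightarrow> cinner (e i) (e j) = 0) \<and>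
     (\<forall>j. l j > 0 \<longrightarrow> T (e j) = scaleR (l j) (e j)) \<and>
     (\<forall>x. (\<lambda>j. scaleR (l j) (rk1 (e j) x)) sums T x)"

lemma bclin_sub_rk1: "bounded_clinear T \<Longrightarrow> bounded_clinear (\<lambda>x. T x - scaleR c (rk1 e x))"
proof -
  assume L: "bounded_clinear T"
  have L2: "bounded_clinear (rk1 e)" by (rule bclin_rk1)
  obtain K1 where K1: "\<forall>x. norm (T x) \<le> norm x * K1" using L unfolding bounded_clinear_def by blast
  obtain K2 where K2: "\<forall>x. norm (rk1 e x) \<le> norm x * K2" using L2 unfolding bounded_clinear_def by blast
  show ?thesis unfolding bounded_clinear_def
  proof (intro conjI allI exI)
    show "T (x + y) - scaleR c (rk1 e (x + y)) = T x - scaleR c (rk1 e x) + (T y - scaleR c (rk1 e y))" for x y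
      by (simp add: bclinD(1)[OF L] bclinD(1)[OF L2] scaleR_add_right)
    show "T (scaleC d x) - scaleR c (rk1 e (scaleC d x)) = scaleC d (T x - scaleR c (rk1 e x))" for d x
      by (simp add: bclinD(2)[OF L] bclinD(2)[OF L2] scaleC_diff_right scaleR_scaleC scaleC_scaleC mult.commute)
    show "norm (T x - scaleR c (rk1 e x)) \<le> norm x * (K1 + \<bar>c\<bar> * K2)" for x
    proof -
      have "norm (T x - scaleR c (rk1 e x)) \<le> norm (T x) + \<bar>c\<bar> * norm (rk1 e x)"
        using norm_triangle_ineq4[of "T x" "scaleR c (rk1 e x)"] by simp
      also have "\<dots> \<le> norm x * K1 + \<bar>c\<bar> * (norm x * K2)"
        using K1 K2 by (intro add_mono mult_left_mono) auto
      finally show ?thesis by (simp add: algebra_simps)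
    qed
  qed
qed

lemma mcnj: "z * cnj z = (complex_of_real (cmod z))^2"
  by (metis complex_norm_square of_real_power)
lemma mcnj2: "cnj z * z = (complex_of_real (cmod z))^2"
  by (metis mcnj mult.commute)

lemma cinner_rk1: "cinner x (rk1 e x) = complex_of_real ((cmod (cinner e x))^2)"
  unfolding rk1_def using cinner_commute[of x e]
  by (simp add: cinner_scaleC_right mcnj mcnj2 mult.commute)

lemma qf_sub_rk1: "qf (\<lambda>x. T x - scaleR c (rk1 e x)) x = qf T x - c * (cmod (cinner e x))^2"
  unfolding qf_def by (simp add: cinner_diff_right cinner_scaleR_right cinner_rk1)

lemma pos_sub_rk1:
  assumes pos: "positive_op T" and ne: "norm e = 1" and ev: "T e = scaleR M e"
  shows "positive_op (\<lambda>x. T x - scaleR M (rk1 e x))"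
  unfolding positive_op_def
proof (intro conjI allI)
  have L: "bounded_clinear T" using posD(1)[OF pos] .
  show "bounded_clinear (\<lambda>x. T x - scaleR M (rk1 e x))" by (rule bclin_sub_rk1[OF L])
  fix x
  show "Im (cinner x (T x - scaleR M (rk1 e x))) = 0"
    using posD(2)[OF pos, of x] by (simp add: cinner_diff_right cinner_scaleR_right cinner_rk1)
  define c where "c = cinner e x"
  define y where "y = x - scaleC c e"
  have ey: "cinner e y = 0" using ne by (simp add: y_def c_def cinner_diff_right cinner_scaleC_right cinner_self)
  have ye: "cinner y e = 0" using ey cinner_commute[of e y] by simp
  have xy: "x = y + scaleC c e" by (simp add: y_def)
  have "qf T x = qf T y + M * (cmod c)^2"
  proof -
    have t1: "cinner y (T (scaleC c e)) = 0" using ye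
      by (simp add: bclinD(2)[OF L] ev cinner_scaleC_right cinner_scaleR_right)
    have t2: "cinner (scaleC c e) (T y) = 0"
      using pos_selfadj[OF pos, of "scaleC c e" y] ey
      by (simp add: bclinD(2)[OF L] ev cinner_scaleC_left cinner_scaleR_left)
    have t3: "cinner (scaleC c e) (T (scaleC c e)) = complex_of_real (M * (cmod c)^2)"
      using ne by (simp add: bclinD(2)[OF L] ev cinner_scaleC_left cinner_scaleC_right cinner_scaleR_right
          cinner_self mcnj mcnj2 mult.commute mult.left_commute)
    show ?thesis unfolding qf_def
      by (subst (1 2) xy) (simp add: bclinD(1)[OF L] cinner_add_left cinner_add_right t1 t2 t3)
  qed
  then have "qf (\<lambda>x. T x - scaleR M (rk1 e x)) x = qf T y" by (simp add: qf_sub_rk1 c_def)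
  then show "0 \<le> Re (cinner x (T x - scaleR M (rk1 e x)))"
    using qf_nonneg[OF pos, of y] unfolding qf_def by simp
qed

definition ev :: "('a::chilbert \<Rightarrow> 'a) \<Rightarrow> 'a" where
  "ev T = (SOME e. norm e = 1 \<and> T e = scaleR (topv T) e)"

definition step :: "('a::chilbert \<Rightarrow> 'a) \<Rightarrow> ('a \<Rightarrow> 'a)" where
  "step T = (\<lambda>x. T x - scaleR (topv T) (rk1 (ev T) x))"

definition Ak :: "('a::chilbert \<Rightarrow> 'a) \<Rightarrow> nat \<Rightarrow> ('a \<Rightarrow> 'a)" where
  "Ak A k = (step ^^ k) A"

definition lamA :: "('a::chilbert \<Rightarrow> 'a) \<Rightarrow> nat \<Rightarrow> real" where
  "lamA A k = topv (Ak A k)"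

definition vecA :: "('a::chilbert \<Rightarrow> 'a) \<Rightarrow> nat \<Rightarrow> 'a" where
  "vecA A k = ev (Ak A k)"

lemma Ak_0: "Ak A 0 = A" by (simp add: Ak_def)
lemma Ak_Suc: "Ak A (Suc k) = step (Ak A k)" by (simp add: Ak_def)

lemma ev_prop:
  fixes T :: "'a::chilbert \<Rightarrow> 'a"
  assumes "positive_op T" "seqc T" "norm (u::'a::chilbert) = 1"
  shows "norm (ev T) = 1 \<and> T (ev T) = scaleR (topv T) (ev T)"
  unfolding ev_def by (rule someI_ex[OF pos_top_eigen[OF assms]])

lemma step_pos:
  fixes T :: "'a::chilbert \<Rightarrow> 'a"
  assumes "positive_op T" "seqc T" "norm (u::'a::chilbert) = 1"
  shows "positive_op (step T) \<and> seqc (step T)"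
  using ev_prop[OF assms] pos_sub_rk1[OF assms(1)] seqc_sub_rk1[OF assms(2)]
  unfolding step_def by blast

lemma step_topv:
  fixes T :: "'a::chilbert \<Rightarrow> 'a"
  assumes "positive_op T" "seqc T" "norm (u::'a::chilbert) = 1"
  shows "topv (step T) \<le> topv T"
proof -
  have M0: "0 \<le> topv T" using topv_nonneg[OF assms(1) assms(3)] .
  show ?thesis unfolding topv_def[of "step T"]
  proof (rule cSup_least)
    show "qf (step T) ` {x. norm x = 1} \<noteq> {}" using assms(3) by blast
    fix y assume "y \<in> qf (step T) ` {x. norm x = 1}"
    then obtain x where x: "norm x = 1" "y = qf (step T) x" by blast
    have "qf (step T) x \<le> qf T x" unfolding step_def qf_sub_rk1 using M0 by simp
    also have "\<dots> \<le> topv T" by (rule qf_le_topv_unit[OF posD(1)[OF assms(1)] x(1)])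
    finally show "y \<le> topv T" using x by simp
  qed
qed

locale specA =
  fixes A :: "'a::chilbert \<Rightarrow> 'a" and u :: 'a
  assumes pos: "positive_op A" and sc: "seqc A" and u: "norm u = 1"
begin

lemma Ak_pos: "positive_op (Ak A k) \<and> seqc (Ak A k)"
proof (induction k)
  case 0 then show ?case using pos sc by (simp add: Ak_0)
next
  case (Suc k) then show ?case using step_pos[OF conjunct1[OF Suc.IH] conjunct2[OF Suc.IH] u] by (simp add: Ak_Suc)
qed

lemma vec_prop: "norm (vecA A k) = 1" "Ak A k (vecA A k) = scaleR (lamA A k) (vecA A k)"
  using ev_prop[OF conjunct1[OF Ak_pos] conjunct2[OF Ak_pos] u, of k]
  unfolding vecA_def lamA_def by auto

lemma lam_nonneg: "0 \<le> lamA A k"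
  unfolding lamA_def using topv_nonneg[OF conjunct1[OF Ak_pos] u] .

lemma lam_dec: "decseq (lamA A)"
proof (rule decseq_SucI)
  fix k show "lamA A (Suc k) \<le> lamA A k"
    unfolding lamA_def Ak_Suc using step_topv[OF conjunct1[OF Ak_pos] conjunct2[OF Ak_pos] u] .
qed

lemma Ak_sum: "Ak A k x = A x - (\<Sum>j<k. scaleR (lamA A j) (rk1 (vecA A j) x))"
proof (induction k)
  case 0 then show ?case by (simp add: Ak_0)
next
  case (Suc k) then show ?case by (simp add: Ak_Suc step_def lamA_def vecA_def)
qed

lemma Ak_kills: "j < k \<Longrightarrow> lamA A j > 0 \<Longrightarrow> Ak A k (vecA A j) = 0"
proof (induction k)
  case 0 then show ?case by simp
next
  case (Suc k)
  have pk: "positive_op (Ak A k)" using Ak_pos by blast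
  have e: "Ak A (Suc k) (vecA A j) = Ak A k (vecA A j) - scaleR (lamA A k) (rk1 (vecA A k) (vecA A j))"
    by (simp add: Ak_Suc step_def lamA_def vecA_def)
  show ?case
  proof (cases "j = k")
    case True
    then show ?thesis using e vec_prop[of k]
      by (simp add: rk1_def cinner_self scaleC_one)
  next
    case False
    then have jk: "j < k" using Suc.prems by simp
    have z: "Ak A k (vecA A j) = 0" using Suc.IH jk Suc.prems by blast
    have "complex_of_real (lamA A k) * cinner (vecA A k) (vecA A j) = 0"
    proof -
      have "complex_of_real (lamA A k) * cinner (vecA A k) (vecA A j) = cinner (Ak A k (vecA A k)) (vecA A j)"
        using vec_prop(2)[of k] by (simp add: cinner_scaleR_left)
      also have "\<dots> = 0" using pos_selfadj[OF pk] z by simp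
      finally show ?thesis .
    qed
    then have "scaleR (lamA A k) (rk1 (vecA A k) (vecA A j)) = 0"
      unfolding rk1_def scaleR_scaleC scaleC_scaleC by (simp only: scaleC_zero_left)
    then show ?thesis using e z by simp
  qed
qed

lemma vec_orth_lt: 
  assumes "j < k" "lamA A j > 0" "lamA A k > 0"
  shows "cinner (vecA A k) (vecA A j) = 0"
proof -
  have pk: "positive_op (Ak A k)" using Ak_pos by blast
  have "complex_of_real (lamA A k) * cinner (vecA A k) (vecA A j) = cinner (Ak A k (vecA A k)) (vecA A j)"
    using vec_prop(2)[of k] by (simp add: cinner_scaleR_left)
  also have "\<dots> = 0" using pos_selfadj[OF pk] Ak_kills[OF assms(1,2)] by simp
  finally show ?thesis using assms(3) by simp
qed

lemma vec_orth:
  assumes "i \<noteq> j" "lamA A i > 0" "lamA A j > 0"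
  shows "cinner (vecA A i) (vecA A j) = 0"
proof (cases "i < j")
  case True
  then have "cinner (vecA A j) (vecA A i) = 0" using vec_orth_lt assms by blast
  then show ?thesis by (metis cinner_commute complex_cnj_zero)
next
  case False
  then show ?thesis using vec_orth_lt assms by simp
qed

lemma vec_eigen:
  assumes "lamA A k > 0"
  shows "A (vecA A k) = scaleR (lamA A k) (vecA A k)"
proof -
  have "(\<Sum>j<k. scaleR (lamA A j) (rk1 (vecA A j) (vecA A k))) = 0"
  proof (rule sum.neutral, intro ballI)
    fix j assume "j \<in> {..<k}"
    then have jk: "j < k" by simp
    have "lamA A k \<le> lamA A j" using lam_dec jk by (simp add: decseqD)
    then have "lamA A j > 0" using assms by simp
    then have "cinner (vecA A j) (vecA A k) = 0" using vec_orth[of j k] jk assms by simp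
    then show "scaleR (lamA A j) (rk1 (vecA A j) (vecA A k)) = 0" by (simp add: rk1_def)
  qed
  then show ?thesis using Ak_sum[of k "vecA A k"] vec_prop(2)[of k] by simp
qed

end


context specA begin

lemma lam_lim: "lamA A \<longlonglongrightarrow> 0"
proof -
  obtain L where L: "lamA A \<longlonglongrightarrow> L" "\<forall>i. L \<le> lamA A i"
    using decseq_convergent[OF lam_dec, of 0] lam_nonneg by blast
  have L0: "0 \<le> L" using LIMSEQ_le_const[OF L(1)] lam_nonneg by blast
  have "L = 0"
  proof (rule ccontr)
    assume "L \<noteq> 0"
    then have Lp: "L > 0" using L0 by simp
    then have lp: "\<And>k. lamA A k > 0" using L(2) less_le_trans by blast
    have b: "bounded (range (vecA A))" unfolding bounded_iff using vec_prop(1) by auto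
    obtain l r where r: "strict_mono r" "(\<lambda>n. A (vecA A (r n))) \<longlonglongrightarrow> l"
      using sc b unfolding seqc_def by blast
    obtain M where M: "\<forall>m\<ge>M. \<forall>n\<ge>M. norm (A (vecA A (r m)) - A (vecA A (r n))) < L"
      using CauchyD[OF LIMSEQ_imp_Cauchy[OF r(2)] Lp] by blast
    define a where "a = r M"
    define b where "b = r (Suc M)"
    have ab: "a \<noteq> b" using r(1) unfolding a_def b_def strict_mono_def by (metis lessI less_irrefl)
    have nl: "norm (A (vecA A a) - A (vecA A b)) < L" using M a_def b_def by auto
    have eq: "(norm (A (vecA A a) - A (vecA A b)))^2 = (lamA A a)^2 + (lamA A b)^2"
    proof -
      have "cinner (scaleR (lamA A a) (vecA A a)) (scaleR (lamA A b) (vecA A b)) = 0"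
        using vec_orth[OF ab lp lp] by (simp add: cinner_scaleR_left cinner_scaleR_right)
      then show ?thesis using vec_eigen[OF lp] vec_eigen[OF lp]
        by (simp add: norm_diff_sq vec_prop(1) lam_nonneg)
    qed
    have l2: "L^2 \<le> (lamA A a)^2" using L(2) L0 by (simp add: power_mono)
    have "(norm (A (vecA A a) - A (vecA A b)))^2 < L^2" using nl by (intro power_strict_mono) auto
    then show False using eq l2 zero_le_power2[of "lamA A b"] by linarith
  qed
  then show ?thesis using L(1) by simp
qed

lemma sums_A: "(\<lambda>j. scaleR (lamA A j) (rk1 (vecA A j) x)) sums A x"
  unfolding sums_def
proof -
  have z: "(\<lambda>n. Ak A n x) \<longlonglongrightarrow> 0"
  proof (rule Lim_null_comparison)
    show "\<forall>\<^sub>F n in sequentially. norm (Ak A n x) \<le> lamA A n * norm x"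
      using norm_le_topv[OF conjunct1[OF Ak_pos]] unfolding lamA_def by (intro always_eventually) auto
    show "(\<lambda>n. lamA A n * norm x) \<longlonglongrightarrow> 0"
      using tendsto_mult[OF lam_lim tendsto_const[of "norm x"]] by simp
  qed
  have "(\<lambda>n. A x - Ak A n x) \<longlonglongrightarrow> A x - 0" by (intro tendsto_intros z)
  then show "(\<lambda>n. \<Sum>j<n. scaleR (lamA A j) (rk1 (vecA A j) x)) \<longlonglongrightarrow> A x"
    by (simp add: Ak_sum)
qed

lemma ED_A: "ED A (lamA A) (vecA A)"
  unfolding ED_def using lam_nonneg lam_dec lam_lim vec_prop(1) vec_orth vec_eigen sums_A by blast

end

lemma spectral:
  fixes A :: "'a::chilbert \<Rightarrow> 'a"
  assumes "positive_op A" "compact_op A" "norm (u::'a) = 1"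
  shows "\<exists>l e. ED A l e"
proof -
  interpret specA A u using assms compact_seqc by unfold_locales auto
  show ?thesis using ED_A by blast
qed


lemma cinner_rk1': "cinner x (rk1 e x) = complex_of_real ((cmod (cinner e x))^2)"
  by (rule cinner_rk1)

lemma sums_qf:
  assumes "(\<lambda>j. scaleR (a j) (rk1 (v j) x)) sums T x"
  shows "(\<lambda>j. a j * (cmod (cinner (v j) x))^2) sums qf T x"
proof -
  have bl: "bounded_linear (\<lambda>y. Re (cinner x y))"
    using bounded_linear_compose[OF bounded_linear_Re bounded_linear_cinner_right] .
  have "(\<lambda>j. Re (cinner x (scaleR (a j) (rk1 (v j) x)))) sums Re (cinner x (T x))"
    using bounded_linear.sums[OF bl assms] .
  then show ?thesis unfolding qf_def by (simp add: cinner_scaleR_right cinner_rk1)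
qed

lemma cinner_sum_right: "cinner x (sum g S) = (\<Sum>l\<in>S. cinner (x::'a::chilbert) (g l))"
  by (induction S rule: infinite_finite_induct) (auto simp: cinner_add_right)

lemma cinner_sum_left: "cinner (sum g S) x = (\<Sum>l\<in>S. cinner (g l) (x::'a::chilbert))"
  by (induction S rule: infinite_finite_induct) (auto simp: cinner_add_left)

definition orthon :: "(nat \<Rightarrow> 'a::chilbert) \<Rightarrow> nat set \<Rightarrow> bool" where
  "orthon f P \<longleftrightarrow> (\<forall>i\<in>P. norm (f i) = 1) \<and> (\<forall>i\<in>P. \<forall>j\<in>P. i \<noteq> j \<longrightarrow> cinner (f i) (f j) = 0)"

lemma orthon_cinner: "orthon f P \<Longrightarrow> i \<in> P \<Longrightarrow> j \<in> P \<Longrightarrow> cinner (f i) (f j) = (if i = j then 1 else 0)"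
  unfolding orthon_def by (auto simp: cinner_self)

lemma orthon_coeff:
  assumes "orthon f P" "finite S" "S \<subseteq> P" "i \<in> P"
  shows "cinner (f i) (\<Sum>l\<in>S. scaleC (c l) (f l)) = (if i \<in> S then c i else 0)"
proof -
  have "cinner (f i) (\<Sum>l\<in>S. scaleC (c l) (f l)) = (\<Sum>l\<in>S. c l * cinner (f i) (f l))"
    by (simp add: cinner_sum_right cinner_scaleC_right)
  also have "\<dots> = (\<Sum>l\<in>S. if l = i then c l else 0)"
    using assms by (intro sum.cong) (auto simp: orthon_cinner)
  also have "\<dots> = (if i \<in> S then c i else 0)" using assms(2) by (simp add: sum.delta')
  finally show ?thesis .
qed

lemma orthon_norm:
  assumes "orthon f P" "finite S" "S \<subseteq> P"
  shows "(norm (\<Sum>l\<in>S. scaleC (c l) (f l)))^2 = (\<Sum>l\<in>S. (cmod (c l))^2)"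
proof -
  define s where "s = (\<Sum>l\<in>S. scaleC (c l) (f l))"
  have gen: "\<And>t. cinner (\<Sum>l\<in>S. scaleC (c l) (f l)) t = (\<Sum>l\<in>S. cnj (c l) * cinner (f l) t)"
    by (simp add: cinner_sum_left cinner_scaleC_left)
  have "cinner s s = (\<Sum>l\<in>S. cnj (c l) * cinner (f l) s)"
    using gen[of s] by (simp add: s_def)
  also have "\<dots> = (\<Sum>l\<in>S. complex_of_real ((cmod (c l))^2))"
  proof (intro sum.cong refl)
    fix l assume l: "l \<in> S"
    then have "cinner (f l) s = c l" using orthon_coeff[OF assms, of l c] assms(3) by (auto simp: s_def)
    then show "cnj (c l) * cinner (f l) s = complex_of_real ((cmod (c l))^2)" by (simp add: mcnj2)
  qed
  finally have "complex_of_real ((norm s)^2) = complex_of_real (\<Sum>l\<in>S. (cmod (c l))^2)"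
    by (simp add: cinner_self)
  then show ?thesis unfolding s_def using of_real_eq_iff by blast
qed

lemma bessel_finite:
  assumes "orthon f P" "finite S" "S \<subseteq> P"
  shows "(\<Sum>l\<in>S. (cmod (cinner (f l) y))^2) \<le> (norm y)^2"
proof -
  define s where "s = (\<Sum>l\<in>S. scaleC (cinner (f l) y) (f l))"
  define z where "z = y - s"
  have fz: "cinner (f i) z = 0" if "i \<in> S" for i
    using orthon_coeff[OF assms, of i "\<lambda>l. cinner (f l) y"] that assms(3)
    by (auto simp: z_def s_def cinner_diff_right)
  have sz: "cinner s z = 0"
    unfolding s_def by (simp add: cinner_sum_left cinner_scaleC_left fz)
  have "(norm y)^2 = (norm s)^2 + (norm z)^2 + 2 * Re (cinner s z)"
    using norm_add_sq[of s z] by (simp add: z_def)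
  then have "(norm y)^2 \<ge> (norm s)^2" using sz by simp
  moreover have "(norm s)^2 = (\<Sum>l\<in>S. (cmod (cinner (f l) y))^2)"
    unfolding s_def by (rule orthon_norm[OF assms])
  ultimately show ?thesis by simp
qed

lemma rearr:
  fixes mu c :: "nat \<Rightarrow> real"
  assumes dec: "decseq mu" and nn: "\<And>i. 0 \<le> mu i" and c01: "\<And>i. 0 \<le> c i \<and> c i \<le> 1"
    and cs: "(\<Sum>i<N. c i) \<le> real k" and Nk: "k \<le> N"
  shows "(\<Sum>i<N. mu i * c i) \<le> (\<Sum>i<k. mu i)"
proof -
  have "(\<Sum>i<N. mu i * c i) = (\<Sum>i<N. (mu i - mu k) * c i) + mu k * (\<Sum>i<N. c i)"
    by (simp add: sum_distrib_left sum.distrib[symmetric] algebra_simps)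
  also have "(\<Sum>i<N. (mu i - mu k) * c i) \<le> (\<Sum>i<N. if i < k then mu i - mu k else 0)"
  proof (rule sum_mono)
    fix i assume "i \<in> {..<N}"
    show "(mu i - mu k) * c i \<le> (if i < k then mu i - mu k else 0)"
    proof (cases "i < k")
      case True
      then have "mu k \<le> mu i" using dec by (simp add: decseqD)
      then show ?thesis using True c01[of i] by (simp add: mult_left_le)
    next
      case False
      then have "mu i \<le> mu k" using dec by (simp add: decseqD)
      then show ?thesis using False c01[of i] by (simp add: mult_nonpos_nonneg)
    qed
  qed
  also have "(\<Sum>i<N. if i < k then mu i - mu k else 0) = (\<Sum>i<k. mu i - mu k)"
  proof -
    have "{..<N} \<inter> {..<k} = {..<k}" using Nk by auto
    then show ?thesis using sum.inter_restrict[of "{..<N}" "\<lambda>i. mu i - mu k" "{..<k}"] by simp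
  qed
  also have "(\<Sum>i<k. mu i - mu k) = (\<Sum>i<k. mu i) - real k * mu k"
    by (simp add: sum_subtractf)
  finally have "(\<Sum>i<N. mu i * c i) \<le> (\<Sum>i<k. mu i) - real k * mu k + mu k * (\<Sum>i<N. c i)"
    by simp
  moreover have "mu k * (\<Sum>i<N. c i) \<le> mu k * real k"
    using cs nn[of k] by (simp add: mult_left_mono)
  ultimately show ?thesis by (simp add: algebra_simps)
qed


lemma cmod_cinner_commute: "cmod (cinner x y) = cmod (cinner y (x::'a::chilbert))"
  by (metis cinner_commute complex_mod_cnj)

lemma pythag:
  assumes "orthon f P" "finite S" "S \<subseteq> P"
  shows "(norm y)^2 = (norm (y - (\<Sum>l\<in>S. scaleC (cinner (f l) y) (f l))))^2 + (\<Sum>l\<in>S. (cmod (cinner (f l) y))^2)"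
    and "\<And>i. i \<in> S \<Longrightarrow> cinner (f i) (y - (\<Sum>l\<in>S. scaleC (cinner (f l) y) (f l))) = 0"
    and "cinner y (y - (\<Sum>l\<in>S. scaleC (cinner (f l) y) (f l))) = complex_of_real ((norm (y - (\<Sum>l\<in>S. scaleC (cinner (f l) y) (f l))))^2)"
proof -
  define s where "s = (\<Sum>l\<in>S. scaleC (cinner (f l) y) (f l))"
  define z where "z = y - s"
  have fz: "cinner (f i) z = 0" if "i \<in> S" for i
    using orthon_coeff[OF assms, of i "\<lambda>l. cinner (f l) y"] that assms(3)
    by (auto simp: z_def s_def cinner_diff_right)
  then show "\<And>i. i \<in> S \<Longrightarrow> cinner (f i) (y - (\<Sum>l\<in>S. scaleC (cinner (f l) y) (f l))) = 0"
    by (simp add: z_def s_def)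
  have sz: "cinner s z = 0"
    unfolding s_def by (simp add: cinner_sum_left cinner_scaleC_left fz)
  have "(norm y)^2 = (norm s)^2 + (norm z)^2 + 2 * Re (cinner s z)"
    using norm_add_sq[of s z] by (simp add: z_def)
  moreover have "(norm s)^2 = (\<Sum>l\<in>S. (cmod (cinner (f l) y))^2)"
    unfolding s_def by (rule orthon_norm[OF assms])
  ultimately show "(norm y)^2 = (norm (y - (\<Sum>l\<in>S. scaleC (cinner (f l) y) (f l))))^2 + (\<Sum>l\<in>S. (cmod (cinner (f l) y))^2)"
    using sz by (simp add: z_def s_def)
  have "cinner y z = cinner z z + cinner s z" by (simp add: z_def cinner_diff_left)
  then show "cinner y (y - (\<Sum>l\<in>S. scaleC (cinner (f l) y) (f l))) = complex_of_real ((norm (y - (\<Sum>l\<in>S. scaleC (cinner (f l) y) (f l))))^2)"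
    using sz by (simp add: z_def s_def cinner_self)
qed

locale kf =
  fixes B :: "'a::chilbert \<Rightarrow> 'a" and mu :: "nat \<Rightarrow> real" and f :: "nat \<Rightarrow> 'a"
    and xi :: "nat \<Rightarrow> real" and q :: "nat \<Rightarrow> 'a"
  assumes ED: "ED B mu f" and xi0: "\<And>j. xi j \<ge> 0" and qn: "\<And>j. norm (q j) = 1"
    and dec: "\<And>x. (\<lambda>j. scaleR (xi j) (rk1 (q j) x)) sums B x"
begin

definition "P = {i. mu i > 0}"

lemma mu0: "mu i \<ge> 0" using ED unfolding ED_def by blast
lemma mudec: "decseq mu" using ED unfolding ED_def by blast
lemma mulim: "mu \<longlonglongrightarrow> 0" using ED unfolding ED_def by blast
lemma fn: "norm (f i) = 1" using ED unfolding ED_def by blast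
lemma feig: "mu i > 0 \<Longrightarrow> B (f i) = scaleR (mu i) (f i)" using ED unfolding ED_def by blast
lemma orth: "orthon f P" using ED unfolding ED_def orthon_def P_def by blast
lemma sumsB: "(\<lambda>j. scaleR (mu j) (rk1 (f j) x)) sums B x" using ED unfolding ED_def by blast

lemma qfB: "(\<lambda>i. mu i * (cmod (cinner (f i) x))^2) sums qf B x"
  by (rule sums_qf[OF sumsB])

lemma qfB': "(\<lambda>j. xi j * (cmod (cinner (q j) x))^2) sums qf B x"
  by (rule sums_qf[OF dec])

lemma partial_le: "finite I \<Longrightarrow> (\<Sum>j\<in>I. xi j * (cmod (cinner (q j) x))^2) \<le> qf B x"
proof -
  assume fI: "finite I"
  have "(\<Sum>j\<in>I. xi j * (cmod (cinner (q j) x))^2) \<le> (\<Sum>j. xi j * (cmod (cinner (q j) x))^2)"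
    by (rule sum_le_suminf[OF sums_summable[OF qfB'[of x]] fI]) (simp add: xi0)
  then show ?thesis using sums_unique[OF qfB'[of x]] by simp
qed

lemma qf_fin:
  assumes "finite S" "S \<subseteq> P"
  shows "qf B (\<Sum>l\<in>S. scaleC (c l) (f l)) = (\<Sum>i\<in>S. mu i * (cmod (c i))^2)"
proof -
  have "(\<lambda>i. mu i * (cmod (cinner (f i) (\<Sum>l\<in>S. scaleC (c l) (f l))))^2) =
        (\<lambda>i. if i \<in> S then mu i * (cmod (c i))^2 else 0)"
  proof
    fix i
    show "mu i * (cmod (cinner (f i) (\<Sum>l\<in>S. scaleC (c l) (f l))))^2 = (if i \<in> S then mu i * (cmod (c i))^2 else 0)"
    proof (cases "i \<in> P")
      case True then show ?thesis using orthon_coeff[OF orth assms True, of c] by simp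
    next
      case False
      then have "mu i = 0" using mu0[of i] by (simp add: P_def)
      then show ?thesis using False assms(2) by auto
    qed
  qed
  then have "(\<lambda>i. if i \<in> S then mu i * (cmod (c i))^2 else 0) sums qf B (\<Sum>l\<in>S. scaleC (c l) (f l))"
    using qfB[of "\<Sum>l\<in>S. scaleC (c l) (f l)"] by simp
  then show ?thesis using sums_If_finite_set[OF assms(1), of "\<lambda>i. mu i * (cmod (c i))^2"] sums_unique2 by blast
qed

end


context kf begin

lemma S_fin: "finite ({..<N} \<inter> P)" "{..<N} \<inter> P \<subseteq> P" by auto

lemma inv_bound:
  assumes xp: "xi j > 0"
  shows "xi j * (\<Sum>i<N. if mu i > 0 then (cmod (cinner (f i) (q j)))^2 / mu i else 0) \<le> 1"
proof -
  define S where "S = {..<N} \<inter> P"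
  have fS: "finite S" "S \<subseteq> P" using S_fin by (auto simp: S_def)
  define c where "c i = cinner (f i) (q j) / complex_of_real (mu i)" for i
  define x where "x = (\<Sum>l\<in>S. scaleC (c l) (f l))"
  define s where "s = (\<Sum>i\<in>S. (cmod (cinner (f i) (q j)))^2 / mu i)"
  have s_eq: "s = (\<Sum>i<N. if mu i > 0 then (cmod (cinner (f i) (q j)))^2 / mu i else 0)"
    unfolding s_def S_def using sum.inter_restrict[of "{..<N}" "\<lambda>i. (cmod (cinner (f i) (q j)))^2 / mu i" P]
    by (simp add: P_def)
  have s0: "s \<ge> 0" unfolding s_def using mu0 by (intro sum_nonneg) simp
  have qx: "cinner (q j) x = complex_of_real s"
  proof -
    have "cinner (q j) x = (\<Sum>l\<in>S. c l * cinner (q j) (f l))"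
      by (simp add: x_def cinner_sum_right cinner_scaleC_right)
    also have "\<dots> = (\<Sum>l\<in>S. complex_of_real ((cmod (cinner (f l) (q j)))^2 / mu l))"
    proof (intro sum.cong refl)
      fix l assume "l \<in> S"
      have "c l * cinner (q j) (f l) = (cinner (f l) (q j) * cnj (cinner (f l) (q j))) / complex_of_real (mu l)"
        using cinner_commute[of "q j" "f l"] by (simp add: c_def)
      then show "c l * cinner (q j) (f l) = complex_of_real ((cmod (cinner (f l) (q j)))^2 / mu l)"
        by (simp add: mcnj)
    qed
    finally show ?thesis by (simp add: s_def)
  qed
  have qfx: "qf B x = s"
  proof -
    have "qf B x = (\<Sum>i\<in>S. mu i * (cmod (c i))^2)" unfolding x_def by (rule qf_fin[OF fS])
    also have "\<dots> = s" unfolding s_def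
    proof (intro sum.cong refl)
      fix i assume "i \<in> S"
      then have "mu i > 0" using fS by (auto simp: P_def)
      then show "mu i * (cmod (c i))^2 = (cmod (cinner (f i) (q j)))^2 / mu i"
        by (simp add: c_def norm_divide power_divide power2_eq_square)
    qed
    finally show ?thesis .
  qed
  have "xi j * (cmod (cinner (q j) x))^2 \<le> qf B x" using partial_le[of "{j}" x] by simp
  then have ineq: "xi j * s^2 \<le> s" using qx qfx s0 by simp
  show ?thesis
  proof (cases "s = 0")
    case True then show ?thesis using s_eq by simp
  next
    case False
    then have "s > 0" using s0 by simp
    then have "xi j * s \<le> 1" using ineq by (simp add: power2_eq_square)
    then show ?thesis using s_eq by simp
  qed
qed

lemma qf_bound_orth:
  assumes fy: "\<And>i. i \<in> {..<N} \<inter> P \<Longrightarrow> cinner (f i) y = 0"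
  shows "qf B y \<le> mu N * (norm y)^2"
proof -
  have trm: "mu i * (cmod (cinner (f i) y))^2 \<le> mu N * (if i \<in> P - ({..<N} \<inter> P) then (cmod (cinner (f i) y))^2 else 0)" for i
  proof (cases "i \<in> P - ({..<N} \<inter> P)")
    case True
    then have Ni: "N \<le> i" by auto
    then have "mu i \<le> mu N" using mudec by (simp add: decseqD)
    then have "mu i * (cmod (cinner (f i) y))^2 \<le> mu N * (cmod (cinner (f i) y))^2" by (simp add: mult_right_mono)
    then show ?thesis using True Ni by simp
  next
    case False
    then have "i \<notin> P \<or> i \<in> {..<N} \<inter> P" by blast
    then show ?thesis
    proof
      assume "i \<notin> P" then have "mu i = 0" using mu0[of i] by (simp add: P_def)
      then show ?thesis using False mu0[of N] by simp
    next
      assume "i \<in> {..<N} \<inter> P" then show ?thesis using fy False by simp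
    qed
  qed
  have "(\<Sum>i<n. mu i * (cmod (cinner (f i) y))^2) \<le> mu N * (norm y)^2" for n
  proof -
    have "(\<Sum>i<n. mu i * (cmod (cinner (f i) y))^2) \<le> (\<Sum>i<n. mu N * (if i \<in> P - ({..<N} \<inter> P) then (cmod (cinner (f i) y))^2 else 0))"
      by (rule sum_mono) (rule trm)
    also have "\<dots> = mu N * (\<Sum>i\<in>{..<n} \<inter> (P - ({..<N} \<inter> P)). (cmod (cinner (f i) y))^2)"
      by (simp add: sum_distrib_left[symmetric] sum.inter_restrict)
    also have "\<dots> \<le> mu N * (norm y)^2"
      using bessel_finite[OF orth, of "{..<n} \<inter> (P - ({..<N} \<inter> P))" y] mu0[of N]
      by (intro mult_left_mono) auto
    finally show ?thesis .
  qed
  then show ?thesis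
    using LIMSEQ_le_const2[OF qfB[of y, unfolded sums_def]] by blast
qed

lemma parseval:
  assumes xp: "xi j > 0"
  shows "(\<lambda>i. if mu i > 0 then (cmod (cinner (f i) (q j)))^2 else 0) sums 1"
proof -
  define y where "y N = q j - (\<Sum>l\<in>{..<N} \<inter> P. scaleC (cinner (f l) (q j)) (f l))" for N
  have py1: "1 = (norm (y N))^2 + (\<Sum>l\<in>{..<N} \<inter> P. (cmod (cinner (f l) (q j)))^2)" for N
    using pythag(1)[OF orth S_fin(1)[of N] S_fin(2)[of N], of "q j"] qn[of j] by (simp add: y_def)
  have py2: "\<And>i. i \<in> {..<N} \<inter> P \<Longrightarrow> cinner (f i) (y N) = 0" for N
    using pythag(2)[OF orth S_fin(1)[of N] S_fin(2)[of N], of _ "q j"] by (simp add: y_def)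
  have py3: "cinner (q j) (y N) = complex_of_real ((norm (y N))^2)" for N
    using pythag(3)[OF orth S_fin(1)[of N] S_fin(2)[of N], of "q j"] by (simp add: y_def)
  have yb: "(norm (y N))^2 \<le> mu N / xi j" for N
  proof -
    have "xi j * ((norm (y N))^2)^2 \<le> qf B (y N)"
      using partial_le[of "{j}" "y N"] py3[of N] by (simp add: norm_power)
    also have "\<dots> \<le> mu N * (norm (y N))^2" by (rule qf_bound_orth[OF py2])
    finally have h: "xi j * ((norm (y N))^2)^2 \<le> mu N * (norm (y N))^2" .
    show ?thesis
    proof (cases "norm (y N) = 0")
      case True then show ?thesis using mu0[of N] xp by simp
    next
      case False
      define a where "a = (norm (y N))^2"
      have ap: "a > 0" using False by (simp add: a_def)
      have "(xi j * a) * a \<le> mu N * a" using h by (simp add: a_def power2_eq_square[of "(norm (y N))^2"] mult.assoc)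
      then have "xi j * a \<le> mu N" using ap by simp
      then have "xi j * (norm (y N))^2 \<le> mu N" by (simp add: a_def)
      then show ?thesis using xp by (simp add: field_simps)
    qed
  qed
  have y0: "(\<lambda>N. (norm (y N))^2) \<longlonglongrightarrow> 0"
  proof (rule tendsto_sandwich[of "\<lambda>N. 0" _ _ "\<lambda>N. mu N / xi j"])
    show "\<forall>\<^sub>F N in sequentially. 0 \<le> (norm (y N))^2" by simp
    show "\<forall>\<^sub>F N in sequentially. (norm (y N))^2 \<le> mu N / xi j" using yb by simp
    show "(\<lambda>N. 0) \<longlonglongrightarrow> (0::real)" by simp
    show "(\<lambda>N. mu N / xi j) \<longlonglongrightarrow> 0" using tendsto_divide_zero[OF mulim] by blast
  qed
  have "(\<lambda>N. 1 - (norm (y N))^2) \<longlonglongrightarrow> 1 - 0" by (intro tendsto_intros y0)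
  moreover have "(\<Sum>i<N. if mu i > 0 then (cmod (cinner (f i) (q j)))^2 else 0) = 1 - (norm (y N))^2" for N
    using py1[of N] sum.inter_restrict[of "{..<N}" "\<lambda>i. (cmod (cinner (f i) (q j)))^2" P]
    by (simp add: P_def)
  ultimately show ?thesis unfolding sums_def by simp
qed

lemma qf_f: "mu i > 0 \<Longrightarrow> qf B (f i) = mu i"
  unfolding qf_def using feig[of i] fn[of i] by (simp add: cinner_scaleR_right cinner_self)

lemma kf_main: "(\<Sum>j<k. xi j) \<le> (\<Sum>j<k. mu j)"
proof -
  define g where "g j i = xi j * (if mu i > 0 then (cmod (cinner (f i) (q j)))^2 else 0)" for j i
  have g0: "g j i \<ge> 0" for j i using xi0[of j] by (simp add: g_def)
  have gs: "g j sums xi j" for j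
  proof (cases "xi j > 0")
    case True
    show ?thesis using sums_mult[OF parseval[OF True], of "xi j"] by (simp add: g_def[abs_def])
  next
    case False
    then have "xi j = 0" using xi0[of j] by simp
    then show ?thesis by (simp add: g_def[abs_def])
  qed
  define c where "c i = (if mu i > 0 then (\<Sum>j<k. g j i) / mu i else 0)" for i
  have mc: "mu i * c i = (\<Sum>j<k. g j i)" for i
  proof (cases "mu i > 0")
    case True then show ?thesis by (simp add: c_def)
  next
    case False then show ?thesis by (simp add: c_def g_def)
  qed
  have cs: "(\<lambda>i. mu i * c i) sums (\<Sum>j<k. xi j)"
    unfolding mc using sums_sum[of "{..<k}" g xi] gs by simp
  have c01: "0 \<le> c i \<and> c i \<le> 1" for i
  proof (cases "mu i > 0")
    case True
    have "(\<Sum>j<k. g j i) = (\<Sum>j\<in>{..<k}. xi j * (cmod (cinner (q j) (f i)))^2)"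
      using True by (simp add: g_def cmod_cinner_commute)
    also have "\<dots> \<le> qf B (f i)" by (rule partial_le) simp
    also have "\<dots> = mu i" by (rule qf_f[OF True])
    finally have "(\<Sum>j<k. g j i) \<le> mu i" .
    moreover have "(\<Sum>j<k. g j i) \<ge> 0" by (intro sum_nonneg g0)
    ultimately show ?thesis using True by (simp add: c_def field_simps)
  next
    case False then show ?thesis by (simp add: c_def)
  qed
  have csum: "(\<Sum>i<N. c i) \<le> real k" for N
  proof -
    have "(\<Sum>i<N. c i) = (\<Sum>i<N. \<Sum>j<k. (if mu i > 0 then g j i / mu i else 0))"
      by (intro sum.cong refl) (simp add: c_def sum_divide_distrib)
    also have "\<dots> = (\<Sum>j<k. \<Sum>i<N. (if mu i > 0 then g j i / mu i else 0))"
      by (rule sum.swap)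
    also have "\<dots> \<le> (\<Sum>j<k. 1)"
    proof (rule sum_mono)
      fix j assume "j \<in> {..<k}"
      have eq: "(\<Sum>i<N. (if mu i > 0 then g j i / mu i else 0)) =
            xi j * (\<Sum>i<N. if mu i > 0 then (cmod (cinner (f i) (q j)))^2 / mu i else 0)"
        by (simp add: sum_distrib_left if_distrib) (intro sum.cong refl, simp add: g_def)
      show "(\<Sum>i<N. (if mu i > 0 then g j i / mu i else 0)) \<le> 1"
      proof (cases "xi j > 0")
        case True then show ?thesis using eq inv_bound[OF True, of N] by simp
      next
        case False then have "xi j = 0" using xi0[of j] by simp
        then show ?thesis using eq by simp
      qed
    qed
    finally show ?thesis by simp
  qed
  have "\<forall>N\<ge>k. (\<Sum>i<N. mu i * c i) \<le> (\<Sum>i<k. mu i)"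
    using rearr[OF mudec mu0 c01 csum] by blast
  then show ?thesis
    using LIMSEQ_le_const2[OF cs[unfolded sums_def]] by blast
qed

end


lemma sum_if_inter: "(\<Sum>j\<in>A. if j \<in> P then v j else 0) = (\<Sum>j\<in>A \<inter> P. v j)" if "finite A"
  using sum.inter_restrict[OF that, of v P] by simp

lemma rf_summable:
  fixes g :: "nat \<Rightarrow> 'a::chilbert"
  assumes og: "orthon g P" and bd: "\<And>n. (\<Sum>j<n. if j \<in> P then (cmod (a j))^2 else 0) \<le> C"
  shows "summable (\<lambda>j. if j \<in> P then scaleC (a j) (g j) else 0)"
proof -
  define s where "s j = (if j \<in> P then (cmod (a j))^2 else 0)" for j
  have ss: "summable s"
    by (rule summableI_nonneg_bounded[where x=C]) (auto simp: s_def bd[unfolded s_def])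
  show ?thesis unfolding summable_Cauchy
  proof (intro allI impI)
    fix e :: real assume e: "e > 0"
    then obtain N where N: "\<forall>m\<ge>N. \<forall>n. norm (sum s {m..<n}) < e^2"
      using ss[unfolded summable_Cauchy] by (meson zero_less_power)
    have "norm (\<Sum>j\<in>{m..<n}. if j \<in> P then scaleC (a j) (g j) else 0) < e" if m: "m \<ge> N" for m n
    proof -
      have "(norm (\<Sum>j\<in>{m..<n}. if j \<in> P then scaleC (a j) (g j) else 0))^2
          = (norm (\<Sum>j\<in>{m..<n} \<inter> P. scaleC (a j) (g j)))^2" by (simp add: sum_if_inter)
      also have "\<dots> = (\<Sum>j\<in>{m..<n} \<inter> P. (cmod (a j))^2)" by (rule orthon_norm[OF og]) auto
      also have "\<dots> = sum s {m..<n}" by (simp add: s_def sum_if_inter)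
      also have "\<dots> < e^2" using N m by (simp add: abs_less_iff)
      finally show ?thesis using e by (simp add: power_less_imp_less_base)
    qed
    then show "\<exists>N. \<forall>m\<ge>N. \<forall>n. norm (\<Sum>j\<in>{m..<n}. if j \<in> P then scaleC (a j) (g j) else 0) < e" by blast
  qed
qed

definition W :: "(nat \<Rightarrow> 'a::chilbert) \<Rightarrow> (nat \<Rightarrow> 'a) \<Rightarrow> nat set \<Rightarrow> 'a \<Rightarrow> 'a" where
  "W e g P x = (\<Sum>j. if j \<in> P then scaleC (cinner (e j) x) (g j) else 0)"

locale ons =
  fixes e g :: "nat \<Rightarrow> 'a::chilbert" and P :: "nat set"
  assumes oe: "orthon e P" and og: "orthon g P"
begin

lemma bessel_part: "(\<Sum>j<n. if j \<in> P then (cmod (cinner (e j) x))^2 else 0) \<le> (norm x)^2"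
  using bessel_finite[OF oe, of "{..<n} \<inter> P" x] by (simp add: sum_if_inter)

lemma W_sums: "(\<lambda>j. if j \<in> P then scaleC (cinner (e j) x) (g j) else 0) sums W e g P x"
  unfolding W_def by (rule summable_sums[OF rf_summable[OF og bessel_part]])

lemma W_coeff: "i \<in> P \<Longrightarrow> cinner (g i) (W e g P x) = cinner (e i) x"
proof -
  assume i: "i \<in> P"
  have "(\<lambda>j. cinner (g i) (if j \<in> P then scaleC (cinner (e j) x) (g j) else 0)) sums cinner (g i) (W e g P x)"
    by (rule bounded_linear.sums[OF bounded_linear_cinner_right W_sums])
  moreover have "(\<lambda>j. cinner (g i) (if j \<in> P then scaleC (cinner (e j) x) (g j) else 0)) = (\<lambda>j. if j = i then cinner (e j) x else 0)"
    using i og by (auto simp: cinner_scaleC_right orthon_cinner)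
  ultimately show ?thesis using sums_single[of i "\<lambda>j. cinner (e j) x"] sums_unique2 by metis
qed

lemma W_norm: "(\<lambda>j. if j \<in> P then (cmod (cinner (e j) x))^2 else 0) sums (norm (W e g P x))^2"
proof -
  have "(\<lambda>j. cinner (if j \<in> P then scaleC (cinner (e j) x) (g j) else 0) (W e g P x)) sums cinner (W e g P x) (W e g P x)"
    by (rule bounded_linear.sums[OF bounded_linear_cinner_left W_sums])
  moreover have "(\<lambda>j. cinner (if j \<in> P then scaleC (cinner (e j) x) (g j) else 0) (W e g P x)) =
      (\<lambda>j. complex_of_real (if j \<in> P then (cmod (cinner (e j) x))^2 else 0))"
    by (auto simp: cinner_scaleC_left W_coeff mcnj2)
  ultimately have "(\<lambda>j. complex_of_real (if j \<in> P then (cmod (cinner (e j) x))^2 else 0)) sums complex_of_real ((norm (W e g P x))^2)"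
    by (simp add: cinner_self)
  then show ?thesis using sums_of_real_iff by blast
qed

lemma W_norm_le: "norm (W e g P x) \<le> norm x"
proof -
  have "(norm (W e g P x))^2 \<le> (norm x)^2"
    using LIMSEQ_le_const2[OF W_norm[unfolded sums_def]] bessel_part by blast
  then show ?thesis by (simp add: power2_le_iff_abs_le)
qed

lemma W_bclin: "bounded_clinear (W e g P)"
  unfolding bounded_clinear_def
proof (intro conjI allI exI)
  fix x y
  have "(\<lambda>j. (if j \<in> P then scaleC (cinner (e j) x) (g j) else 0) + (if j \<in> P then scaleC (cinner (e j) y) (g j) else 0)) sums (W e g P x + W e g P y)"
    by (intro sums_add W_sums)
  then have "(\<lambda>j. if j \<in> P then scaleC (cinner (e j) (x + y)) (g j) else 0) sums (W e g P x + W e g P y)"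
    by (simp add: cinner_add_right scaleC_add_left if_distrib cong: if_cong)
  then show "W e g P (x + y) = W e g P x + W e g P y" using W_sums sums_unique2 by blast
next
  fix c x
  have "(\<lambda>j. scaleC c (if j \<in> P then scaleC (cinner (e j) x) (g j) else 0)) sums scaleC c (W e g P x)"
    by (rule bounded_linear.sums[OF bounded_linear_scaleC_right W_sums])
  then have "(\<lambda>j. if j \<in> P then scaleC (cinner (e j) (scaleC c x)) (g j) else 0) sums scaleC c (W e g P x)"
    by (simp add: cinner_scaleC_right scaleC_scaleC if_distrib cong: if_cong)
  then show "W e g P (scaleC c x) = scaleC c (W e g P x)" using W_sums sums_unique2 by blast
next
  fix x show "norm (W e g P x) \<le> norm x * 1" using W_norm_le by simp
qed

lemma W_adj: "cinner (W e g P x) y = cinner x (W g e P y)"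
proof -
  interpret ge: ons g e P using oe og by unfold_locales
  have "(\<lambda>j. cinner (if j \<in> P then scaleC (cinner (e j) x) (g j) else 0) y) sums cinner (W e g P x) y"
    by (rule bounded_linear.sums[OF bounded_linear_cinner_left W_sums])
  moreover have "(\<lambda>j. cinner x (if j \<in> P then scaleC (cinner (g j) y) (e j) else 0)) sums cinner x (W g e P y)"
    by (rule bounded_linear.sums[OF bounded_linear_cinner_right ge.W_sums])
  moreover have "(\<lambda>j. cinner (if j \<in> P then scaleC (cinner (e j) x) (g j) else 0) y) =
                 (\<lambda>j. cinner x (if j \<in> P then scaleC (cinner (g j) y) (e j) else 0))"
    by (rule ext) (simp add: cinner_scaleC_left cinner_scaleC_right mult.commute cinner_commute[of x])
  ultimately show ?thesis using sums_unique2 by metis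
qed

lemma W_basis: "i \<in> P \<Longrightarrow> W e g P (e i) = g i"
proof -
  assume i: "i \<in> P"
  have "(\<lambda>j. if j \<in> P then scaleC (cinner (e j) (e i)) (g j) else 0) = (\<lambda>j. if j = i then g j else 0)"
    using i oe by (auto simp: orthon_cinner scaleC_one)
  then show ?thesis using W_sums[of "e i"] sums_single[of i g] sums_unique2 by metis
qed

end


lemma proj_unique:
  assumes p1: "projection_op R1" and p2: "projection_op R2" and r: "range R1 = range R2"
  shows "R1 = R2"
proof
  fix x
  have i1: "R1 \<circ> R1 = R1" and s1: "\<forall>x y. cinner (R1 x) y = cinner x (R1 y)"
    using p1 unfolding projection_op_def selfadjoint_op_def by auto
  have i2: "R2 \<circ> R2 = R2" and s2: "\<forall>x y. cinner (R2 x) y = cinner x (R2 y)"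
    using p2 unfolding projection_op_def selfadjoint_op_def by auto
  have fix2: "R2 z = z" if "z \<in> range R2" for z
    using that i2 by (metis comp_apply rangeE)
  have fix1: "R1 z = z" if "z \<in> range R1" for z
    using that i1 by (metis comp_apply rangeE)
  have a: "R2 (R1 x) = R1 x" using fix2 r by (metis rangeI)
  have b: "R1 (R2 y) = R2 y" for y using fix1 r by (metis rangeI)
  show "R1 x = R2 x"
  proof (rule cinner_ext_right)
    fix y
    have "cinner (R1 x) y = cinner (R2 (R1 x)) y" using a by simp
    also have "\<dots> = cinner (R1 x) (R2 y)" using s2 by simp
    also have "\<dots> = cinner x (R1 (R2 y))" using s1 by simp
    also have "\<dots> = cinner x (R2 y)" using b by simp
    also have "\<dots> = cinner (R2 x) y" using s2 by simp
    finally show "cinner (R1 x) y = cinner (R2 x) y" .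
  qed
qed

lemma adj_unique:
  assumes "\<forall>x y. cinner (T x) y = cinner x (S y)"
  shows "adj T = S"
proof -
  have "\<forall>x y. cinner (T x) y = cinner x (adj T y)"
    unfolding adj_def using someI_ex[of "\<lambda>S. \<forall>x y. cinner (T x) y = cinner x (S y)"] assms by blast
  then show ?thesis using assms by (intro ext cinner_ext_left) metis
qed

lemma ED_orthon: "ED T l e \<Longrightarrow> orthon e {j. l j > 0}"
  unfolding ED_def orthon_def by blast

locale oneED =
  fixes A :: "'a::chilbert \<Rightarrow> 'a" and l :: "nat \<Rightarrow> real" and e :: "nat \<Rightarrow> 'a"
  assumes ED: "ED A l e" and posA: "positive_op A"
begin

definition "PP = {j. l j > 0}"
definition "R0 = W e e PP"

lemma oe: "orthon e PP" using ED_orthon[OF ED] by (simp add: PP_def)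
lemma l0: "l j \<ge> 0" using ED unfolding ED_def by blast
lemma en: "norm (e j) = 1" using ED unfolding ED_def by blast
lemma eeig: "l j > 0 \<Longrightarrow> A (e j) = scaleR (l j) (e j)" using ED unfolding ED_def by blast
lemma sumsA: "(\<lambda>j. scaleR (l j) (rk1 (e j) x)) sums A x" using ED unfolding ED_def by blast

sublocale ee: ons e e PP using oe by unfold_locales

lemma R0_bclin: "bounded_clinear R0" unfolding R0_def by (rule ee.W_bclin)

lemma R0_coeff: "i \<in> PP \<Longrightarrow> cinner (e i) (R0 x) = cinner (e i) x"
  unfolding R0_def by (rule ee.W_coeff)

lemma R0_idem: "R0 (R0 x) = R0 x"
proof -
  have "(\<lambda>j. if j \<in> PP then scaleC (cinner (e j) (R0 x)) (e j) else 0) = (\<lambda>j. if j \<in> PP then scaleC (cinner (e j) x) (e j) else 0)"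
    by (auto simp: R0_coeff)
  then show ?thesis using ee.W_sums[of "R0 x"] ee.W_sums[of x] sums_unique2 unfolding R0_def by metis
qed

lemma R0_sa: "cinner (R0 x) y = cinner x (R0 y)"
  unfolding R0_def by (rule ee.W_adj)

lemma R0_proj: "projection_op R0"
  unfolding projection_op_def selfadjoint_op_def using R0_bclin R0_idem R0_sa by auto

lemma R0_A: "R0 (A x) = A x"
proof -
  have "(\<lambda>j. if j \<in> PP then scaleC (cinner (e j) (A x)) (e j) else 0) = (\<lambda>j. scaleR (l j) (rk1 (e j) x))"
  proof
    fix j
    show "(if j \<in> PP then scaleC (cinner (e j) (A x)) (e j) else 0) = scaleR (l j) (rk1 (e j) x)"
    proof (cases "j \<in> PP")
      case True
      then have "cinner (e j) (A x) = complex_of_real (l j) * cinner (e j) x"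
        using pos_selfadj[OF posA, of "e j" x] eeig[of j] by (simp add: PP_def cinner_scaleR_left)
      then show ?thesis using True by (simp add: rk1_def scaleR_scaleC scaleC_scaleC)
    next
      case False then have "l j = 0" using l0[of j] by (simp add: PP_def)
      then show ?thesis using False by simp
    qed
  qed
  then show ?thesis using ee.W_sums[of "A x"] sumsA[of x] sums_unique2 unfolding R0_def by metis
qed

lemma R0_e: "j \<in> PP \<Longrightarrow> R0 (e j) = e j"
  unfolding R0_def by (rule ee.W_basis)

lemma R0_range: "range R0 = closure (range A)"
proof
  show "range R0 \<subseteq> closure (range A)"
  proof
    fix z assume "z \<in> range R0"
    then obtain x where z: "z = R0 x" by blast
    define p where "p n = (\<Sum>j<n. if j \<in> PP then scaleC (cinner (e j) x) (e j) else 0)" for n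
    have pl: "p \<longlonglongrightarrow> z" using ee.W_sums[of x] unfolding sums_def p_def z R0_def .
    have "p n \<in> range A" for n
    proof -
      have "A (\<Sum>j<n. if j \<in> PP then scaleC (cinner (e j) x / complex_of_real (l j)) (e j) else 0) = p n"
        unfolding p_def using posD(1)[OF posA]
      proof (simp add: bclin_sum, intro sum.cong refl)
        fix j
        show "A (if j \<in> PP then scaleC (cinner (e j) x / complex_of_real (l j)) (e j) else 0) =
              (if j \<in> PP then scaleC (cinner (e j) x) (e j) else 0)"
          using bclin_zero[OF posD(1)[OF posA]] bclinD(2)[OF posD(1)[OF posA]] eeig[of j]
          by (auto simp: PP_def scaleR_scaleC scaleC_scaleC)
      qed
      then show ?thesis by (metis rangeI)
    qed
    then show "z \<in> closure (range A)" using pl closure_sequential by blast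
  qed
  show "closure (range A) \<subseteq> range R0"
  proof (rule closure_minimal)
    show "range A \<subseteq> range R0" using R0_A by (metis image_subsetI rangeI)
    have "range R0 = {x. R0 x = x}" using R0_idem by (auto simp: image_def) (metis)
    moreover have "closed {x. R0 x = x}"
      by (rule closed_Collect_eq[OF linear_continuous_on[OF bclin_blin[OF R0_bclin]] continuous_on_id])
    ultimately show "closed (range R0)" by simp
  qed
qed

lemma range_proj_A: "range_proj A = R0"
  unfolding range_proj_def
proof (rule the_equality)
  show "projection_op R0 \<and> range R0 = closure (range A)" using R0_proj R0_range by blast
  fix R assume "projection_op R \<and> range R = closure (range A)"
  then show "R = R0" using proj_unique[of R R0] R0_proj R0_range by auto
qed

end


locale twoED = a: oneED A l e + b: oneED B l g
  for A B :: "'a::chilbert \<Rightarrow> 'a" and l :: "nat \<Rightarrow> real" and e g :: "nat \<Rightarrow> 'a"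
begin

definition "V = W e g a.PP"
definition "S = W g e a.PP"

lemma PPeq: "b.PP = a.PP" by (simp add: a.PP_def b.PP_def)

sublocale eg: ons e g a.PP using a.oe b.oe PPeq by unfold_locales auto
sublocale ge: ons g e a.PP using a.oe b.oe PPeq by unfold_locales auto

lemma V_bclin: "bounded_clinear V" unfolding V_def by (rule eg.W_bclin)

lemma V_adj: "cinner (V x) y = cinner x (S y)" unfolding V_def S_def by (rule eg.W_adj)

lemma adjV: "adj V = S" using adj_unique V_adj by blast

lemma SV: "S (V x) = a.R0 x"
proof -
  have "(\<lambda>j. if j \<in> a.PP then scaleC (cinner (g j) (V x)) (e j) else 0) = (\<lambda>j. if j \<in> a.PP then scaleC (cinner (e j) x) (e j) else 0)"
    by (auto simp: V_def eg.W_coeff)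
  then show ?thesis using ge.W_sums[of "V x"] a.ee.W_sums[of x] sums_unique2 unfolding S_def a.R0_def by metis
qed

lemma V_kernel: "V z = 0" if "\<And>j. j \<in> a.PP \<Longrightarrow> cinner (e j) z = 0"
proof -
  have "(\<lambda>j. if j \<in> a.PP then scaleC (cinner (e j) z) (g j) else 0) = (\<lambda>j. 0)" using that by auto
  then show ?thesis using eg.W_sums[of z] sums_zero sums_unique2 unfolding V_def by metis
qed

lemma V_pi: "partial_isometry V"
  unfolding partial_isometry_def
proof (intro conjI allI impI)
  show "bounded_clinear V" by (rule V_bclin)
  fix x assume ker: "\<forall>y. V y = 0 \<longrightarrow> cinner y x = 0"
  define z where "z = x - a.R0 x"
  have "V z = 0" by (rule V_kernel) (simp add: z_def cinner_diff_right a.R0_coeff)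
  then have zx: "cinner z x = 0" using ker by blast
  have "cinner x x = cinner (a.R0 x) x" using zx by (simp add: z_def cinner_diff_left)
  also have "\<dots> = cinner (a.R0 x) (a.R0 x)" by (metis a.R0_idem a.R0_sa)
  finally have c: "cinner x x = cinner (a.R0 x) (a.R0 x)" .
  have "Re (cinner x x) = Re (cinner (a.R0 x) (a.R0 x))" using c by (rule arg_cong)
  then have "(norm x)^2 = (norm (a.R0 x))^2" by (simp only: Re_cinner_self)
  moreover have "(norm (a.R0 x))^2 = (norm (V x))^2"
    using a.ee.W_norm[of x] eg.W_norm[of x] sums_unique2 unfolding a.R0_def V_def by metis
  ultimately have "(norm (V x))^2 = (norm x)^2" by simp
  then show "norm (V x) = norm x" by (rule power2_eq_imp_eq) auto
qed

lemma B_VAS: "B y = V (A (S y))"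
proof -
  have "(\<lambda>j. V (scaleR (l j) (rk1 (e j) (S y)))) sums V (A (S y))"
    by (rule bclin_sums[OF V_bclin a.sumsA])
  moreover have "(\<lambda>j. V (scaleR (l j) (rk1 (e j) (S y)))) = (\<lambda>j. scaleR (l j) (rk1 (g j) y))"
  proof
    fix j show "V (scaleR (l j) (rk1 (e j) (S y))) = scaleR (l j) (rk1 (g j) y)"
    proof (cases "j \<in> a.PP")
      case True
      have "cinner (e j) (S y) = cinner (g j) y" unfolding S_def by (rule ge.W_coeff[OF True])
      moreover have "V (e j) = g j" unfolding V_def by (rule eg.W_basis[OF True])
      ultimately show ?thesis
        by (simp add: rk1_def bclin_scaleR[OF V_bclin] bclinD(2)[OF V_bclin])
    next
      case False then have "l j = 0" using a.l0[of j] by (simp add: a.PP_def)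
      then show ?thesis by (simp add: bclin_zero[OF V_bclin])
    qed
  qed
  ultimately show ?thesis using b.sumsA[of y] sums_unique2 by metis
qed

lemma mvn: "mvn_equiv A B"
  unfolding mvn_equiv_def
proof (intro exI conjI)
  show "partial_isometry V" by (rule V_pi)
  have e: "adj V \<circ> V = a.R0" using adjV SV by (auto simp: o_def)
  have z: "positive_op (\<lambda>x::'a. 0)"
    unfolding positive_op_def bounded_clinear_def by simp (rule exI[of _ 0], simp)
  show "op_le (range_proj A) (adj V \<circ> V)"
    unfolding op_le_def a.range_proj_A e using z by simp
  show "B = V \<circ> A \<circ> adj V" using B_VAS adjV by (auto simp: o_def)
qed

lemma transport: "Adm A \<subseteq> Adm B"
proof
  fix xi assume "xi \<in> Adm A"
  then obtain Q where xi0: "\<forall>j. xi j \<ge> 0" and bd: "bounded (range xi)" and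
    rQ: "\<forall>j. rank_one_projection (Q j)" and sQ: "\<forall>x. (\<lambda>j. scaleR (xi j) (Q j x)) sums A x"
    unfolding Adm_def by blast
  obtain p where p: "\<And>j. norm (p j) = 1 \<and> Q j = rk1 (p j)"
  proof -
    have "\<forall>j. \<exists>q. norm q = 1 \<and> Q j = rk1 q" using rank_one_rk1 rQ by blast
    then show ?thesis using that by (metis (no_types))
  qed
  interpret k: kf A l e xi p
    using a.ED xi0 p sQ by unfold_locales auto
  have kPP: "k.P = a.PP" by (simp add: k.P_def a.PP_def)
  define h where "h j = (if xi j > 0 then V (p j) else g 0)" for j
  have hn: "norm (h j) = 1" for j
  proof (cases "xi j > 0")
    case True
    have "(\<lambda>i. if i \<in> a.PP then (cmod (cinner (e i) (p j)))^2 else 0) sums 1"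
      using k.parseval[OF True] by (simp add: a.PP_def)
    then have "(norm (V (p j)))^2 = 1" using eg.W_norm[of "p j"] sums_unique2 unfolding V_def by metis
    then have "norm (V (p j)) = 1" by (metis norm_ge_zero real_sqrt_abs real_sqrt_one abs_of_nonneg)
    then show ?thesis using True by (simp add: h_def)
  next
    case False then show ?thesis using b.en by (simp add: h_def)
  qed
  have "(\<lambda>j. scaleR (xi j) (rk1 (h j) y)) sums B y" for y
  proof -
    have "(\<lambda>j. V (scaleR (xi j) (rk1 (p j) (S y)))) sums V (A (S y))"
      using bclin_sums[OF V_bclin sQ[rule_format, of "S y"]] p by simp
    moreover have "(\<lambda>j. V (scaleR (xi j) (rk1 (p j) (S y)))) = (\<lambda>j. scaleR (xi j) (rk1 (h j) y))"
    proof
      fix j show "V (scaleR (xi j) (rk1 (p j) (S y))) = scaleR (xi j) (rk1 (h j) y)"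
      proof (cases "xi j > 0")
        case True
        have "cinner (p j) (S y) = cinner (V (p j)) y" using V_adj by simp
        then show ?thesis using True
          by (simp add: h_def rk1_def bclin_scaleR[OF V_bclin] bclinD(2)[OF V_bclin])
      next
        case False then have "xi j = 0" using xi0 by (metis less_eq_real_def)
        then show ?thesis by (simp add: bclin_zero[OF V_bclin])
      qed
    qed
    ultimately show ?thesis using B_VAS by simp
  qed
  then show "xi \<in> Adm B" unfolding Adm_def using xi0 bd
    by (intro CollectI conjI exI[of _ "\<lambda>j. rk1 (h j)"]) (auto intro: rk1_rank_one hn)
qed

end


lemma parallelogram: "(norm (u + v))^2 + (norm (u - v))^2 = 2 * (norm u)^2 + 2 * (norm (v::'a::chilbert))^2"
  using norm_add_sq[of u v] norm_diff_sq[of u v] by simp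

lemma proj_exists:
  fixes M :: "'a::chilbert set"
  assumes cl: "closed M" and z: "0 \<in> M" and ad: "\<And>a b. a \<in> M \<Longrightarrow> b \<in> M \<Longrightarrow> a + b \<in> M"
    and sc: "\<And>c a. a \<in> M \<Longrightarrow> scaleC c a \<in> M"
  shows "\<exists>m\<in>M. \<forall>y\<in>M. cinner y (x - m) = 0"
proof -
  define D where "D = Inf ((\<lambda>m. (norm (x - m))^2) ` M)"
  have ne: "(\<lambda>m. (norm (x - m))^2) ` M \<noteq> {}" using z by blast
  have bb: "bdd_below ((\<lambda>m. (norm (x - m))^2) ` M)" by (rule bdd_belowI[of _ 0]) auto
  have Dle: "D \<le> (norm (x - m))^2" if "m \<in> M" for m
    unfolding D_def using bb that by (intro cInf_lower) auto
  have "\<exists>m\<in>M. (norm (x - m))^2 < D + 1 / real (Suc n)" for n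
  proof -
    have "D < D + 1 / real (Suc n)" by simp
    then show ?thesis using cInf_less_iff[OF ne bb] unfolding D_def by blast
  qed
  then obtain mm where mm: "\<And>n. mm n \<in> M" "\<And>n. (norm (x - mm n))^2 < D + 1 / real (Suc n)"
    by metis
  have mid: "scaleR (1/2) (a + b) \<in> M" if "a \<in> M" "b \<in> M" for a b
    using sc[of "a + b" "complex_of_real (1/2)"] ad[OF that] by (simp add: scaleR_scaleC)
  have dist_mm: "(norm (mm p - mm q))^2 \<le> 2 / real (Suc p) + 2 / real (Suc q)" for p q
  proof -
    have par: "(norm ((x - mm p) + (x - mm q)))^2 + (norm ((x - mm p) - (x - mm q)))^2
        = 2 * (norm (x - mm p))^2 + 2 * (norm (x - mm q))^2" by (rule parallelogram)
    have "(x - mm p) + (x - mm q) = scaleR 2 (x - scaleR (1/2) (mm p + mm q))"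
      by (simp add: algebra_simps scaleR_2)
    then have "(norm ((x - mm p) + (x - mm q)))^2 = 4 * (norm (x - scaleR (1/2) (mm p + mm q)))^2"
      by (simp add: power_mult_distrib)
    moreover have "D \<le> (norm (x - scaleR (1/2) (mm p + mm q)))^2" by (rule Dle[OF mid[OF mm(1) mm(1)]])
    moreover have "(x - mm p) - (x - mm q) = mm q - mm p" by simp
    moreover have "norm (mm q - mm p) = norm (mm p - mm q)" by (rule norm_minus_commute)
    ultimately show ?thesis using par mm(2)[of p] mm(2)[of q] by simp
  qed
  have cau: "Cauchy mm"
  proof (rule CauchyI)
    fix e :: real assume e: "e > 0"
    obtain N where N: "4 / real (Suc N) < e^2"
    proof -
      obtain N where "inverse (real (Suc N)) < e^2 / 4" using reals_Archimedean e by (metis divide_pos_pos zero_less_numeral zero_less_power)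
      then have "4 / real (Suc N) < e^2" by (simp add: field_simps)
      then show ?thesis using that by blast
    qed
    have "norm (mm p - mm q) < e" if "p \<ge> N" "q \<ge> N" for p q
    proof -
      have "2 / real (Suc p) \<le> 2 / real (Suc N)" using that by (simp add: frac_le)
      moreover have "2 / real (Suc q) \<le> 2 / real (Suc N)" using that by (simp add: frac_le)
      ultimately have "(norm (mm p - mm q))^2 < e^2" using dist_mm[of p q] N by simp
      then show ?thesis using e by (simp add: power_less_imp_less_base)
    qed
    then show "\<exists>M. \<forall>m\<ge>M. \<forall>n\<ge>M. norm (mm m - mm n) < e" by blast
  qed
  then obtain m where ml: "mm \<longlonglongrightarrow> m" using Cauchy_convergent_iff convergent_def by blast
  have mM: "m \<in> M" using closed_sequentially[OF cl mm(1) ml] .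
  have minimal: "(norm (x - m))^2 \<le> (norm (x - y))^2" if "y \<in> M" for y
  proof -
    have "(\<lambda>n. (norm (x - mm n))^2) \<longlonglongrightarrow> (norm (x - m))^2" by (intro tendsto_intros ml)
    moreover have "(\<lambda>n. D + 1 / real (Suc n)) \<longlonglongrightarrow> D + 0"
    proof (intro tendsto_intros)
      show "(\<lambda>n. 1 / real (Suc n)) \<longlonglongrightarrow> 0"
        using LIMSEQ_inverse_real_of_nat by (simp add: inverse_eq_divide)
    qed
    ultimately have "(norm (x - m))^2 \<le> D + 0"
      using mm(2) by (intro LIMSEQ_le[where X="\<lambda>n. (norm (x - mm n))^2"]) (auto intro: less_imp_le)
    then show ?thesis using Dle[OF that] by linarith
  qed
  have "cinner y (x - m) = 0" if yM: "y \<in> M" for y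
  proof (cases "y = 0")
    case True then show ?thesis by simp
  next
    case False
    define w where "w = x - m"
    define t where "t = cinner y w / complex_of_real ((norm y)^2)"
    have "m + scaleC t y \<in> M" using ad[OF mM sc[OF yM]] .
    then have "(norm w)^2 \<le> (norm (w - scaleC t y))^2"
      using minimal[of "m + scaleC t y"] by (simp add: w_def algebra_simps)
    also have "(norm (w - scaleC t y))^2 = (norm w)^2 + (cmod t * norm y)^2 - 2 * Re (t * cinner w y)"
      by (simp add: norm_diff_sq norm_scaleC cinner_scaleC_right)
    also have "t * cinner w y = complex_of_real ((cmod (cinner y w))^2 / (norm y)^2)"
      using cinner_commute[of w y] by (simp add: t_def mcnj)
    also have "(cmod t * norm y)^2 = (cmod (cinner y w))^2 / (norm y)^2"
      using False by (simp add: t_def norm_divide norm_power power_divide norm_mult power_mult_distrib) (simp add: field_simps power2_eq_square power4_eq_xxxx)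
    finally have "(cmod (cinner y w))^2 / (norm y)^2 \<le> 0" by simp
    then have "(cmod (cinner y w))^2 \<le> 0" using False by (simp add: divide_le_0_iff)
    then show ?thesis by (simp add: w_def)
  qed
  then show ?thesis using mM by blast
qed

lemma riesz:
  fixes phi :: "'a::chilbert \<Rightarrow> complex"
  assumes add: "\<And>x y. phi (x + y) = phi x + phi y" and hom: "\<And>c x. phi (scaleC c x) = c * phi x"
    and bd: "\<And>x. cmod (phi x) \<le> norm x * K"
  shows "\<exists>y. \<forall>x. phi x = cinner y x"
proof (cases "\<forall>x. phi x = 0")
  case True then show ?thesis by (intro exI[of _ 0]) simp
next
  case False
  then obtain x0 where x0: "phi x0 \<noteq> 0" by blast
  have bl: "bounded_linear phi"
  proof (rule bounded_linear_intro[where K=K])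
    show "phi (x + y) = phi x + phi y" for x y by (rule add)
    show "phi (scaleR r x) = scaleR r (phi x)" for r x
      using hom[of "complex_of_real r" x] by (simp add: scaleR_scaleC scaleR_conv_of_real)
    show "norm (phi x) \<le> norm x * K" for x by (rule bd)
  qed
  have p0: "phi 0 = 0" using hom[of 0 0] by simp
  define M where "M = {x. phi x = 0}"
  have cl: "closed M" unfolding M_def
    by (rule closed_Collect_eq[OF linear_continuous_on[OF bl] continuous_on_const])
  obtain m where m: "m \<in> M" "\<forall>y\<in>M. cinner y (x0 - m) = 0"
    using proj_exists[OF cl, of x0] p0 add hom unfolding M_def by auto
  define w where "w = x0 - m"
  have pw: "phi w = phi x0"
    using m(1) add[of "x0 - m" m] by (simp add: w_def M_def)
  have w0: "w \<noteq> 0" using pw x0 p0 by auto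
  have key: "cinner w x = (phi x / phi w) * complex_of_real ((norm w)^2)" for x
  proof -
    define v where "v = x - scaleC (phi x / phi w) w"
    have "phi v = 0"
      using add[of v "scaleC (phi x / phi w) w"] hom[of "phi x / phi w" w] pw x0
      by (simp add: v_def)
    then have "cinner v w = 0" using m(2) by (simp add: M_def w_def)
    then have "cinner w v = 0" by (metis cinner_commute complex_cnj_zero)
    then show ?thesis by (simp add: v_def cinner_diff_right cinner_scaleC_right cinner_self)
  qed
  define y where "y = scaleC (cnj (phi w) / complex_of_real ((norm w)^2)) w"
  have "phi x = cinner y x" for x
    using key[of x] w0 pw x0 by (simp add: y_def cinner_scaleC_left)
  then show ?thesis by blast
qed

lemma adj_exists:
  assumes L: "bounded_clinear V"
  shows "\<exists>S. \<forall>x y. cinner (V x) y = cinner x (S y)"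
proof -
  obtain K where K: "\<forall>x. norm (V x) \<le> norm x * K" using L unfolding bounded_clinear_def by blast
  have "\<exists>s. \<forall>x. cinner (V x) y = cinner x s" for y
  proof -
    have "\<exists>s. \<forall>x. cinner y (V x) = cinner s x"
    proof (rule riesz[where K="norm y * K"])
      show "cinner y (V (x + z)) = cinner y (V x) + cinner y (V z)" for x z
        by (simp add: bclinD(1)[OF L] cinner_add_right)
      show "cinner y (V (scaleC c x)) = c * cinner y (V x)" for c x
        by (simp add: bclinD(2)[OF L] cinner_scaleC_right)
      show "cmod (cinner y (V x)) \<le> norm x * (norm y * K)" for x
      proof -
        have "cmod (cinner y (V x)) \<le> norm y * norm (V x)" by (rule cinner_cauchy_schwarz)
        also have "\<dots> \<le> norm y * (norm x * K)" using K by (simp add: mult_left_mono)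
        finally show ?thesis by (simp add: algebra_simps)
      qed
    qed
    then obtain s where s: "\<forall>x. cinner y (V x) = cinner s x" by blast
    have "cinner (V x) y = cinner x s" for x using s[rule_format, of x]
      by (metis cinner_commute)
    then show ?thesis by blast
  qed
  then show ?thesis by metis
qed

lemma adj_prop:
  assumes "bounded_clinear V"
  shows "cinner (V x) y = cinner x (adj V y)"
proof -
  have "\<forall>x y. cinner (V x) y = cinner x (adj V y)"
    unfolding adj_def using someI_ex[OF adj_exists[OF assms]] .
  then show ?thesis by blast
qed


locale mvnED = oneED A l e
  for A :: "'a::chilbert \<Rightarrow> 'a" and l e +
  fixes B V :: "'a \<Rightarrow> 'a" and u :: 'a
  assumes posB: "positive_op B" and pi: "partial_isometry V"
    and ole: "op_le (range_proj A) (adj V \<circ> V)" and Beq: "B = V \<circ> A \<circ> adj V"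
    and un: "norm u = 1"
begin

lemma LV: "bounded_clinear V" using pi unfolding partial_isometry_def by blast

lemma ad: "cinner (V x) y = cinner x (adj V y)" by (rule adj_prop[OF LV])

lemma adj0: "adj V 0 = 0"
  by (rule cinner_ext_left) (metis ad bclin_zero[OF LV] cinner_zero_right)

lemma ker_R0: "V y = 0 \<Longrightarrow> R0 y = 0"
proof -
  assume Vy: "V y = 0"
  have "positive_op (\<lambda>x. (adj V \<circ> V) x - R0 x)" using ole unfolding op_le_def range_proj_A .
  then have "0 \<le> Re (cinner y (adj V (V y) - R0 y))" unfolding positive_op_def by simp
  then have "0 \<le> - Re (cinner y (R0 y))" by (simp add: Vy adj0 cinner_diff_right)
  moreover have "cinner y (R0 y) = cinner (R0 y) (R0 y)" by (metis R0_idem R0_sa)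
  ultimately have "(norm (R0 y))^2 \<le> 0" by (simp add: Re_cinner_self)
  then show "R0 y = 0" by simp
qed

lemma iso: "R0 x = x \<Longrightarrow> norm (V x) = norm x"
proof -
  assume Rx: "R0 x = x"
  have "\<forall>y. V y = 0 \<longrightarrow> cinner y x = 0"
  proof (intro allI impI)
    fix y assume "V y = 0"
    then have "R0 y = 0" by (rule ker_R0)
    then show "cinner y x = 0" using R0_sa[of y x] Rx by simp
  qed
  then show ?thesis using pi unfolding partial_isometry_def by blast
qed

lemma R0_lin: "R0 (x + scaleC c y) = R0 x + scaleC c (R0 y)"
  using bclinD[OF R0_bclin] by simp

lemma Ve_norm: "j \<in> PP \<Longrightarrow> norm (V (e j)) = 1"
  using iso[OF R0_e] en by simp

lemma Ve_orth:
  assumes i: "i \<in> PP" and j: "j \<in> PP" and ij: "i \<noteq> j"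
  shows "cinner (V (e i)) (V (e j)) = 0"
proof -
  have eij: "cinner (e i) (e j) = 0" using oe i j ij unfolding orthon_def by blast
  have gen: "Re (c * cinner (V (e i)) (V (e j))) = 0" for c
  proof -
    have "R0 (e i + scaleC c (e j)) = e i + scaleC c (e j)" using R0_lin R0_e i j by simp
    then have "norm (V (e i + scaleC c (e j))) = norm (e i + scaleC c (e j))" by (rule iso)
    then have "(norm (V (e i) + scaleC c (V (e j))))^2 = (norm (e i + scaleC c (e j)))^2"
      by (simp add: bclinD[OF LV])
    then show ?thesis
      using Ve_norm[OF i] Ve_norm[OF j] en[of i] en[of j] eij
      by (simp add: norm_add_sq norm_scaleC cinner_scaleC_right)
  qed
  have "Re (cinner (V (e i)) (V (e j))) = 0" using gen[of 1] by simp
  moreover have "Im (cinner (V (e i)) (V (e j))) = 0" using gen[of "\<i>"] by simp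
  ultimately show ?thesis by (simp add: complex_eq_iff)
qed

definition "g j = (if l j > 0 then V (e j) else u)"

lemma g_norm: "norm (g j) = 1" using Ve_norm un by (simp add: g_def PP_def)

lemma g_orth: "i \<noteq> j \<Longrightarrow> l i > 0 \<Longrightarrow> l j > 0 \<Longrightarrow> cinner (g i) (g j) = 0"
  using Ve_orth by (simp add: g_def PP_def)

lemma sumsB: "(\<lambda>j. scaleR (l j) (rk1 (g j) y)) sums B y"
proof -
  have "(\<lambda>j. V (scaleR (l j) (rk1 (e j) (adj V y)))) sums V (A (adj V y))"
    by (rule bclin_sums[OF LV sumsA])
  moreover have "(\<lambda>j. V (scaleR (l j) (rk1 (e j) (adj V y)))) = (\<lambda>j. scaleR (l j) (rk1 (g j) y))"
  proof
    fix j show "V (scaleR (l j) (rk1 (e j) (adj V y))) = scaleR (l j) (rk1 (g j) y)"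
    proof (cases "l j > 0")
      case True
      have "cinner (e j) (adj V y) = cinner (V (e j)) y" using ad by simp
      then show ?thesis using True
        by (simp add: g_def rk1_def bclin_scaleR[OF LV] bclinD(2)[OF LV])
    next
      case False then have "l j = 0" using l0[of j] by simp
      then show ?thesis by (simp add: bclin_zero[OF LV])
    qed
  qed
  ultimately show ?thesis using Beq by simp
qed

lemma g_eig: 
  assumes k: "l k > 0" shows "B (g k) = scaleR (l k) (g k)"
proof -
  have "(\<lambda>j. scaleR (l j) (rk1 (g j) (g k))) = (\<lambda>j. if j = k then scaleR (l j) (g j) else 0)"
  proof
    fix j show "scaleR (l j) (rk1 (g j) (g k)) = (if j = k then scaleR (l j) (g j) else 0)"
    proof (cases "j = k")
      case True then show ?thesis using g_norm[of k] by (simp add: rk1_def cinner_self scaleC_one)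
    next
      case False
      show ?thesis
      proof (cases "l j > 0")
        case True then show ?thesis using g_orth[OF False True k] False by (simp add: rk1_def)
      next
        case F2: False then have "l j = 0" using l0[of j] by simp
        then show ?thesis using False by simp
      qed
    qed
  qed
  then show ?thesis using sumsB[of "g k"] sums_single[of k "\<lambda>j. scaleR (l j) (g j)"] sums_unique2 by metis
qed

lemma ED_B: "ED B l g"
  unfolding ED_def using ED g_norm g_orth g_eig sumsB unfolding ED_def by blast

end

lemma ED_Adm:
  assumes "ED T l e" shows "l \<in> Adm T"
proof -
  have l0: "\<forall>j. l j \<ge> 0" and dec: "decseq l" and en: "\<And>j. norm (e j) = 1"
    and sm: "\<forall>x. (\<lambda>j. scaleR (l j) (rk1 (e j) x)) sums T x"
    using assms unfolding ED_def by auto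
  have "bounded (range l)" unfolding bounded_iff
  proof (intro exI[of _ "l 0"] allI ballI)
    fix y assume "y \<in> range l"
    then obtain j where "y = l j" by blast
    then show "norm y \<le> l 0" using l0 dec by (simp add: decseqD)
  qed
  then show ?thesis unfolding Adm_def using l0 sm rk1_rank_one[OF en]
    by (intro CollectI conjI exI[of _ "\<lambda>j. rk1 (e j)"]) auto
qed

lemma Adm_kf:
  assumes EB: "ED B mu f" and xi: "xi \<in> Adm B"
  shows "(\<Sum>j<k. xi j) \<le> (\<Sum>j<k. mu j)"
proof -
  obtain Q where xi0: "\<forall>j. xi j \<ge> 0" and
    rQ: "\<forall>j. rank_one_projection (Q j)" and sQ: "\<forall>x. (\<lambda>j. scaleR (xi j) (Q j x)) sums B x"
    using xi unfolding Adm_def by blast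
  obtain p where p: "\<And>j. norm (p j) = 1 \<and> Q j = rk1 (p j)"
  proof -
    have "\<forall>j. \<exists>q. norm q = 1 \<and> Q j = rk1 q" using rank_one_rk1 rQ by blast
    then show ?thesis using that by (metis (no_types))
  qed
  interpret k: kf B mu f xi p using EB xi0 p sQ by unfold_locales auto
  show ?thesis by (rule k.kf_main)
qed

lemma psum_eq: 
  fixes a b :: "nat \<Rightarrow> real"
  assumes "\<And>k. (\<Sum>j<k. a j) = (\<Sum>j<k. b j)" shows "a = b"
proof
  fix j
  have h1: "(\<Sum>i<Suc j. a i) = (\<Sum>i<Suc j. b i)" by (rule assms)
  have h2: "(\<Sum>i<j. a i) = (\<Sum>i<j. b i)" by (rule assms)
  show "a j = b j" using h1 h2 by simp
qed

theorem mainTheorem4: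
  fixes A B :: "'a::chilbert \<Rightarrow> 'a"
  assumes "compact_op A" and "positive_op A"
    and "compact_op B" and "positive_op B"
  shows "Adm A = Adm B \<longleftrightarrow> mvn_equiv A B"
proof (cases "\<forall>x::'a. x = 0")
  case True
  have noadm: "Adm T = {}" for T :: "'a \<Rightarrow> 'a"
    unfolding Adm_def rank_one_projection_def using True by auto
  have allf: "F = G" for F G :: "'a \<Rightarrow> 'a" using True by (intro ext) metis
  have bid: "bounded_clinear (\<lambda>x::'a. x)"
    unfolding bounded_clinear_def by (intro conjI allI exI[of _ 1]) auto
  have "partial_isometry (\<lambda>x::'a. x)" unfolding partial_isometry_def using bid by auto
  moreover have "op_le (range_proj A) (adj (\<lambda>x::'a. x) \<circ> (\<lambda>x. x))"
  proof -
    have "positive_op (\<lambda>x::'a. x)" unfolding positive_op_def using bid True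
      by (metis Im_cinner_self Re_cinner_self zero_le_power2)
    then show ?thesis unfolding op_le_def using allf by metis
  qed
  moreover have "B = (\<lambda>x. x) \<circ> A \<circ> adj (\<lambda>x. x)" by (rule allf)
  ultimately have "mvn_equiv A B" unfolding mvn_equiv_def by blast
  then show ?thesis using noadm by simp
next
  case False
  then obtain x0 :: 'a where x0: "x0 \<noteq> 0" by blast
  define u where "u = scaleR (1 / norm x0) x0"
  have un: "norm u = 1" using x0 by (simp add: u_def)
  obtain l e where EA: "ED A l e" using spectral[OF assms(2) assms(1) un] by blast
  obtain mu f where EB: "ED B mu f" using spectral[OF assms(4) assms(3) un] by blast
  interpret oA: oneED A l e using EA assms(2) by unfold_locales
  show ?thesis
  proof
    assume eq: "Adm A = Adm B"
    have "(\<Sum>j<k. l j) \<le> (\<Sum>j<k. mu j)" for k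
      using Adm_kf[OF EB, of l] ED_Adm[OF EA] eq by blast
    moreover have "(\<Sum>j<k. mu j) \<le> (\<Sum>j<k. l j)" for k
      using Adm_kf[OF EA, of mu] ED_Adm[OF EB] eq by blast
    ultimately have "l = mu" by (intro psum_eq order_antisym)
    then have EB': "ED B l f" using EB by simp
    interpret t: twoED A B l e f using EA EB' assms(2,4) by unfold_locales
    show "mvn_equiv A B" by (rule t.mvn)
  next
    assume "mvn_equiv A B"
    then obtain V where V: "partial_isometry V" "op_le (range_proj A) (adj V \<circ> V)" "B = V \<circ> A \<circ> adj V"
      unfolding mvn_equiv_def by blast
    interpret m: mvnED A l e B V u using EA assms(2,4) V un by unfold_locales auto
    have EB': "ED B l m.g" by (rule m.ED_B)
    interpret t1: twoED A B l e m.g using EA EB' assms(2,4) by unfold_locales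
    interpret t2: twoED B A l m.g e using EA EB' assms(2,4) by unfold_locales
    show "Adm A = Adm B" using t1.transport t2.transport by blast
  qed
qed


end
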